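(* Let $G$ be a 3-connected graph that contains a non-degenerate vertex-2-edge-separator $(c,e_1,e_2)$. (a) If $c$ is incident to an edge $e_0\in E(G)$ such that $G-e_0-e_1-e_2$ is disconnected with components $C_1$ and $C_2$, let $u_i$ (resp. $v_i$) denote the endvertex of $e_i$ in $C_1$ (resp. $C_2$) for $i\in\{0,1,2\}$, and let $G_1$ (resp. $G_2$) be the graph obtained from $G[V(C_1)]$ (resp. $G[V(C_2)]$) by adding a new vertex $x_1$ (resp. $x_2$) and the edges $u_ix_1$ (resp. $v_ix_2$) for $i\in\{0,1,2\}$. (b) Otherwise, $G-e_1-e_2-c$ has exactly two components $C_1,C_2$; let $u_i$ (resp. $v_i$) be the endvertex of $e_i$ in $C_1$ (resp. $C_2$) for $i\in\{1,2\}$, and let $G_1$ (resp. $G_2$) be obtained from $G[V(C_1)\cup\{c\}]$ (resp. $G[V(C_2)\cup\{c\}]$) by adding a new vertex $x_1$ (resp. $x_2$) and the edges $u_1x_1,u_2x_1,cx_1$ (resp. $v_1x_2,v_2x_2,cx_2$). If $G$ is critical 2.5-connected, then (in either case) $G_1$ and $G_2$ are critical 2.5-connected, 3-connected graphs with fewer vertices than $G$.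
   Context: Graphs are finite, may have parallel edges, no loops. Biconnected: connected and for all pairwise distinct $u,v,w$ there is a $u$-$v$ path avoiding $w$. A biconnected graph $H$ (not a triangle) is 2.5-connected if there is no $(c,e)\in V(H)\times E(H)$ with $H-e-c$ disconnected. A vertex-2-edge-separator of a biconnected graph $H$ is a triple $(c,e_1,e_2)\in V(H)\times E(H)^2$ with $H-e_1-e_2-c$ disconnected. It is degenerate if there is a vertex $u$ of degree 3 whose incident edges are $e_0,e_1,e_2$ and $c$ is the other endvertex of $e_0$; otherwise non-degenerate. $H$ is critical 2.5-connected if it is 2.5-connected and $H-e$ is not 2.5-connected for every $e\in E(H)$. *)

theory Defs
  imports Main
begin

text \<open>Finite loopless multigraphs: a vertex set, an edge set, and for each edge
  its set of (two distinct) endvertices. Parallel edges are allowed.\<close>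

record ('v, 'e) mgraph =
  verts :: "'v set"
  edges :: "'e set"
  ends  :: "'e \<Rightarrow> 'v set"

definition mgraph :: "('v, 'e) mgraph \<Rightarrow> bool" where
  "mgraph G \<longleftrightarrow> finite (verts G) \<and> finite (edges G) \<and>
     (\<forall>e \<in> edges G. ends G e \<subseteq> verts G \<and> card (ends G e) = 2)"

definition adj :: "('v, 'e) mgraph \<Rightarrow> 'v \<Rightarrow> 'v \<Rightarrow> bool" where
  "adj G u v \<longleftrightarrow> (\<exists>e \<in> edges G. ends G e = {u, v})"

definition del_edges :: "('v, 'e) mgraph \<Rightarrow> 'e set \<Rightarrow> ('v, 'e) mgraph" where
  "del_edges G F = G\<lparr>edges := edges G - F\<rparr>"

definition del_vert :: "('v, 'e) mgraph \<Rightarrow> 'v \<Rightarrow> ('v, 'e) mgraph" where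
  "del_vert G c = G\<lparr>verts := verts G - {c}, edges := {e \<in> edges G. c \<notin> ends G e}\<rparr>"

definition del_verts :: "('v, 'e) mgraph \<Rightarrow> 'v set \<Rightarrow> ('v, 'e) mgraph" where
  "del_verts G S = G\<lparr>verts := verts G - S, edges := {e \<in> edges G. ends G e \<inter> S = {}}\<rparr>"

definition connected :: "('v, 'e) mgraph \<Rightarrow> bool" where
  "connected G \<longleftrightarrow> verts G \<noteq> {} \<and> (\<forall>u \<in> verts G. \<forall>v \<in> verts G. (adj G)\<^sup>*\<^sup>* u v)"

definition comp_of :: "('v, 'e) mgraph \<Rightarrow> 'v \<Rightarrow> 'v set" where
  "comp_of G v = {w \<in> verts G. (adj G)\<^sup>*\<^sup>* v w}"

definition components :: "('v, 'e) mgraph \<Rightarrow> 'v set set" where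
  "components G = comp_of G ` verts G"

definition biconnected :: "('v, 'e) mgraph \<Rightarrow> bool" where
  "biconnected G \<longleftrightarrow> connected G \<and>
     (\<forall>u \<in> verts G. \<forall>v \<in> verts G. \<forall>w \<in> verts G.
        u \<noteq> v \<and> u \<noteq> w \<and> v \<noteq> w \<longrightarrow> (adj (del_vert G w))\<^sup>*\<^sup>* u v)"

definition three_connected :: "('v, 'e) mgraph \<Rightarrow> bool" where
  "three_connected G \<longleftrightarrow> card (verts G) > 3 \<and>
     (\<forall>S \<subseteq> verts G. card S \<le> 2 \<longrightarrow> connected (del_verts G S))"

definition triangle :: "('v, 'e) mgraph \<Rightarrow> bool" where
  "triangle G \<longleftrightarrow> card (verts G) = 3 \<and> card (edges G) = 3 \<and>
     (\<forall>u \<in> verts G. \<forall>v \<in> verts G. u \<noteq> v \<longrightarrow> card {e \<in> edges G. ends G e = {u, v}} = 1)"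

definition two_half_connected :: "('v, 'e) mgraph \<Rightarrow> bool" where
  "two_half_connected H \<longleftrightarrow> biconnected H \<and> \<not> triangle H \<and>
     \<not> (\<exists>c \<in> verts H. \<exists>e \<in> edges H. \<not> connected (del_vert (del_edges H {e}) c))"

definition v2e_separator :: "('v, 'e) mgraph \<Rightarrow> 'v \<Rightarrow> 'e \<Rightarrow> 'e \<Rightarrow> bool" where
  "v2e_separator H c e1 e2 \<longleftrightarrow> c \<in> verts H \<and> e1 \<in> edges H \<and> e2 \<in> edges H \<and>
     \<not> connected (del_vert (del_edges H {e1, e2}) c)"

definition degenerate :: "('v, 'e) mgraph \<Rightarrow> 'v \<Rightarrow> 'e \<Rightarrow> 'e \<Rightarrow> bool" where
  "degenerate H c e1 e2 \<longleftrightarrow> (\<exists>u \<in> verts H. \<exists>e0 \<in> edges H.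
     card {e0, e1, e2} = 3 \<and> {e \<in> edges H. u \<in> ends H e} = {e0, e1, e2} \<and> ends H e0 = {u, c})"

definition critical_two_half_connected :: "('v, 'e) mgraph \<Rightarrow> bool" where
  "critical_two_half_connected H \<longleftrightarrow> two_half_connected H \<and>
     (\<forall>e \<in> edges H. \<not> two_half_connected (del_edges H {e}))"

text \<open>Gluing: take the induced subgraph on S (embedded via Some), add a new vertex None,
  and for each list entry T (a singleton set {t} in the intended use) a new edge between
  None and t.\<close>

definition glue :: "('v, 'e) mgraph \<Rightarrow> 'v set \<Rightarrow> 'v set list \<Rightarrow> ('v option, 'e + nat) mgraph" where
  "glue G S ts = \<lparr> verts = insert None (Some ` S),
     edges = Inl ` {e \<in> edges G. ends G e \<subseteq> S} \<union> Inr ` {0..<length ts},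
     ends = (\<lambda>x. case x of Inl e \<Rightarrow> Some ` ends G e
                        | Inr i \<Rightarrow> insert None (Some ` (ts ! i))) \<rparr>"

definition good_piece :: "('w, 'f) mgraph \<Rightarrow> ('v, 'e) mgraph \<Rightarrow> bool" where
  "good_piece G' G \<longleftrightarrow> critical_two_half_connected G' \<and> three_connected G' \<and>
     card (verts G') < card (verts G)"

end

theory Submission
  imports Defs
begin


definition sepr :: "('v,'e) mgraph \<Rightarrow> 'v set \<Rightarrow> 'e set \<Rightarrow> 'v set \<Rightarrow> 'v set \<Rightarrow> bool" where
  "sepr G W F A B \<longleftrightarrow> A \<inter> B = {} \<and> A \<union> B = verts G - W \<and> A \<noteq> {} \<and> B \<noteq> {} \<and>
     (\<forall>e \<in> edges G - F. ends G e \<inter> W = {} \<longrightarrow> ends G e \<subseteq> A \<or> ends G e \<subseteq> B)"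

lemma sepr_sym: "sepr G W F A B \<Longrightarrow> sepr G W F B A"
  unfolding sepr_def by blast

lemma sepr_mono: "sepr G W F A B \<Longrightarrow> F \<subseteq> F' \<Longrightarrow> sepr G W F' A B"
  unfolding sepr_def by blast

lemma sepr_insert: "sepr G W (insert f F) A B \<Longrightarrow>
   sepr G W F A B \<or> (f \<in> edges G \<and> ends G f \<inter> W = {} \<and> \<not> ends G f \<subseteq> A \<and> \<not> ends G f \<subseteq> B)"
  unfolding sepr_def by blast

lemma mgraph_ends: "mgraph G \<Longrightarrow> e \<in> edges G \<Longrightarrow> ends G e \<subseteq> verts G"
  unfolding mgraph_def by blast

lemma mgraph_card: "mgraph G \<Longrightarrow> e \<in> edges G \<Longrightarrow> card (ends G e) = 2"
  unfolding mgraph_def by blast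

lemma mgraph_two: "mgraph G \<Longrightarrow> e \<in> edges G \<Longrightarrow> \<exists>x y. x \<noteq> y \<and> ends G e = {x, y}"
  using mgraph_card card_2_iff by metis

lemma sepr_Int:
  assumes "mgraph G" shows "sepr G W F A B \<longleftrightarrow> sepr G (W \<inter> verts G) F A B"
proof -
  have 1: "\<forall>e \<in> edges G. (ends G e \<inter> W = {}) = (ends G e \<inter> (W \<inter> verts G) = {})"
    using mgraph_ends[OF assms] by blast
  have 2: "verts G - W = verts G - (W \<inter> verts G)" by blast
  show ?thesis unfolding sepr_def 2 using 1 by auto
qed

lemma dv_verts[simp]: "verts (del_verts (del_edges G F) W) = verts G - W"
  unfolding del_verts_def del_edges_def by simp
lemma dv_edges[simp]: "edges (del_verts (del_edges G F) W) = {e \<in> edges G - F. ends G e \<inter> W = {}}"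
  unfolding del_verts_def del_edges_def by simp
lemma dv_ends[simp]: "ends (del_verts (del_edges G F) W) = ends G"
  unfolding del_verts_def del_edges_def by simp

lemma del_vert_eq: "del_vert H c = del_verts H {c}"
proof -
  have "{e \<in> edges H. c \<notin> ends H e} = {e \<in> edges H. ends H e \<inter> {c} = {}}" by blast
  then show ?thesis unfolding del_vert_def del_verts_def by simp
qed

lemma del_edges_eq: "del_edges G F = del_verts (del_edges G F) {}"
proof -
  have "edges G - F = {e \<in> edges G. e \<notin> F}" by blast
  then show ?thesis unfolding del_verts_def del_edges_def by simp
qed

lemma del_verts_empty: "G = del_verts (del_edges G {}) {}"
  unfolding del_verts_def del_edges_def by simp

lemma del_edges_twice: "del_edges (del_edges G F) F' = del_edges G (F \<union> F')"
proof -
  have "edges G - F - F' = edges G - (F \<union> F')" by blast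
  then show ?thesis unfolding del_edges_def by simp
qed



lemma reach_stays:
  assumes "(adj (del_verts (del_edges G F) W))\<^sup>*\<^sup>* x y" "x \<in> A" "sepr G W F A B"
  shows "y \<in> A"
  using assms(1)
proof (induction rule: rtranclp_induct)
  case base then show ?case using assms(2) by simp
next
  case (step y z)
  from step.hyps(2) obtain e where e: "e \<in> edges G - F" "ends G e \<inter> W = {}" "ends G e = {y, z}"
    unfolding adj_def by auto
  from assms(3) e(1,2) have d: "A \<inter> B = {}" and o: "ends G e \<subseteq> A \<or> ends G e \<subseteq> B"
    unfolding sepr_def by blast+
  from o have "ends G e \<subseteq> A" using d step.IH e(3) by blast
  then show ?case using e(3) by blast
qed

lemma conn_iff:
  assumes "mgraph G"
  shows "connected (del_verts (del_edges G F) W) \<longleftrightarrow> verts G - W \<noteq> {} \<and> \<not> (\<exists>A B. sepr G W F A B)"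
proof
  assume c: "connected (del_verts (del_edges G F) W)"
  show "verts G - W \<noteq> {} \<and> \<not> (\<exists>A B. sepr G W F A B)"
  proof
    show "verts G - W \<noteq> {}" using c unfolding connected_def by simp
    show "\<not> (\<exists>A B. sepr G W F A B)"
    proof
      assume "\<exists>A B. sepr G W F A B"
      then obtain A B where s: "sepr G W F A B" by blast
      then obtain a b where ab: "a \<in> A" "b \<in> B" unfolding sepr_def by blast
      from s have AB: "A \<union> B = verts G - W" "A \<inter> B = {}" unfolding sepr_def by simp_all
      with ab have "a \<in> verts G - W" "b \<in> verts G - W" by blast+
      with c have "(adj (del_verts (del_edges G F) W))\<^sup>*\<^sup>* a b" unfolding connected_def by simp
      from reach_stays[OF this ab(1) s] have "b \<in> A" .
      with ab AB show False by blast
    qed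
  qed
next
  assume h: "verts G - W \<noteq> {} \<and> \<not> (\<exists>A B. sepr G W F A B)"
  let ?H = "del_verts (del_edges G F) W"
  show "connected ?H"
    unfolding connected_def
  proof (intro conjI ballI)
    show "verts ?H \<noteq> {}" using h by simp
  next
    fix u v assume u: "u \<in> verts ?H" and v: "v \<in> verts ?H"
    show "(adj ?H)\<^sup>*\<^sup>* u v"
    proof (rule ccontr)
      assume nv: "\<not> (adj ?H)\<^sup>*\<^sup>* u v"
      define A where "A = {y \<in> verts G - W. (adj ?H)\<^sup>*\<^sup>* u y}"
      define B where "B = verts G - W - A"
      have "sepr G W F A B"
        unfolding sepr_def
      proof (intro conjI ballI impI)
        show "A \<inter> B = {}" unfolding B_def by blast
        show "A \<union> B = verts G - W" unfolding A_def B_def by blast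
        have "u \<in> A" using u unfolding A_def by simp
        then show "A \<noteq> {}" by blast
        have "v \<in> B" using v nv unfolding A_def B_def by simp
        then show "B \<noteq> {}" by blast
      next
        fix e assume e: "e \<in> edges G - F" "ends G e \<inter> W = {}"
        then obtain x y where xy: "ends G e = {x, y}" using mgraph_two[OF assms] by blast
        have sub: "ends G e \<subseteq> verts G - W" using e mgraph_ends[OF assms] by blast
        have axy: "adj ?H x y" "adj ?H y x" unfolding adj_def using e xy by auto
        have xV: "x \<in> verts G - W" and yV: "y \<in> verts G - W" using sub xy by auto
        show "ends G e \<subseteq> A \<or> ends G e \<subseteq> B"
        proof (cases "x \<in> A \<or> y \<in> A")
          case True
          then have "x \<in> A \<and> y \<in> A"
          proof
            assume xA: "x \<in> A"
            then have "(adj ?H)\<^sup>*\<^sup>* u x" unfolding A_def by simp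
            then have "(adj ?H)\<^sup>*\<^sup>* u y" using axy(1) by (rule rtranclp.rtrancl_into_rtrancl)
            then have "y \<in> A" using yV unfolding A_def by simp
            then show ?thesis using xA by simp
          next
            assume yA: "y \<in> A"
            then have "(adj ?H)\<^sup>*\<^sup>* u y" unfolding A_def by simp
            then have "(adj ?H)\<^sup>*\<^sup>* u x" using axy(2) by (rule rtranclp.rtrancl_into_rtrancl)
            then have "x \<in> A" using xV unfolding A_def by simp
            then show ?thesis using yA by simp
          qed
          then show ?thesis using xy by simp
        next
          case False then have "x \<in> B" "y \<in> B" using xV yV unfolding B_def by simp_all
          then show ?thesis using xy by simp
        qed
      qed
      with h show False by blast
    qed
  qed
qed

lemma conn_iff_vert:
  assumes "mgraph G"
  shows "connected (del_vert (del_edges G F) c) \<longleftrightarrow> verts G - {c} \<noteq> {} \<and> \<not> (\<exists>A B. sepr G {c} F A B)"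
  using conn_iff[OF assms] del_vert_eq by metis

lemma conn_iff_edges:
  assumes "mgraph G"
  shows "connected (del_edges G F) \<longleftrightarrow> verts G \<noteq> {} \<and> \<not> (\<exists>A B. sepr G {} F A B)"
  using conn_iff[OF assms, of F "{}"] del_edges_eq[of G F] by simp


lemma de_simps[simp]: "verts (del_edges G F) = verts G" "edges (del_edges G F) = edges G - F"
  "ends (del_edges G F) = ends G"
  unfolding del_edges_def by simp_all

lemma dvt_verts[simp]: "verts (del_vert H c) = verts H - {c}"
  unfolding del_vert_def by simp

lemma card_two_minus: "card X = 2 \<Longrightarrow> w \<in> X \<Longrightarrow> card (X - {w}) = 1"
  by (simp add: card_Diff_singleton)

lemma L2:
  assumes "mgraph G" "three_connected G" "finite W" "card W \<le> 2" "sepr G W {} A B"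
  shows False
proof -
  have s: "sepr G (W \<inter> verts G) {} A B" using assms(5) sepr_Int[OF assms(1)] by blast
  have "card (W \<inter> verts G) \<le> 2" using assms(3,4) by (meson card_mono inf_le1 le_trans)
  then have "connected (del_verts G (W \<inter> verts G))" using assms(2) unfolding three_connected_def by blast
  then have "connected (del_verts (del_edges G {}) (W \<inter> verts G))"
    by (metis del_verts_empty del_edges_eq)
  with conn_iff[OF assms(1)] s show False by blast
qed

lemma L3:
  assumes "mgraph G" "three_connected G" "v \<in> verts G" "finite N" "card N \<le> 2" "v \<notin> N"
    and "\<forall>e\<in>edges G. v \<in> ends G e \<longrightarrow> ends G e \<subseteq> insert v N"
  shows False
proof -
  have fin: "finite (verts G)" using assms(1) unfolding mgraph_def by blast
  have c3: "card (verts G) > 3" using assms(2) unfolding three_connected_def by blast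
  have "card (insert v N) \<le> 3" using assms(4,5) by (simp add: card_insert_if)
  have "\<not> verts G \<subseteq> insert v N"
  proof
    assume "verts G \<subseteq> insert v N"
    then have "card (verts G) \<le> card (insert v N)" using assms(4) by (intro card_mono) auto
    with c3 \<open>card (insert v N) \<le> 3\<close> show False by linarith
  qed
  then have ne: "verts G - N - {v} \<noteq> {}" by blast
  have "sepr G N {} {v} (verts G - N - {v})"
    unfolding sepr_def
  proof (intro conjI ballI impI)
    show "{v} \<inter> (verts G - N - {v}) = {}" by blast
    show "{v} \<union> (verts G - N - {v}) = verts G - N" using assms(3,6) by blast
    show "{v} \<noteq> {}" by simp
    show "verts G - N - {v} \<noteq> {}" by (rule ne)
  next
    fix e assume e: "e \<in> edges G - {}" "ends G e \<inter> N = {}"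
    show "ends G e \<subseteq> {v} \<or> ends G e \<subseteq> verts G - N - {v}"
    proof (cases "v \<in> ends G e")
      case True
      then have "ends G e \<subseteq> {v}" using assms(7) e by blast
      then have "card (ends G e) \<le> card {v}" by (intro card_mono) auto
      then show ?thesis using mgraph_card[OF assms(1)] e by simp
    next
      case False
      have "ends G e \<subseteq> verts G" using e mgraph_ends[OF assms(1)] by simp
      then show ?thesis using False e(2) by blast
    qed
  qed
  then show False using L2[OF assms(1,2,4,5)] by blast
qed


lemma L4_aux:
  assumes "mgraph G" "three_connected G" "sepr G {w} {g} A B" "a \<in> A" "b \<in> B" "ends G g = {a, b}"
  shows "B = {b}"
proof (rule ccontr)
  assume nb: "B \<noteq> {b}"
  have AB: "A \<inter> B = {}" "A \<union> B = verts G - {w}" and ed: "\<forall>e \<in> edges G - {g}. ends G e \<inter> {w} = {} \<longrightarrow> ends G e \<subseteq> A \<or> ends G e \<subseteq> B"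
    using assms(3) unfolding sepr_def by auto
  have "sepr G {w, b} {} A (B - {b})"
    unfolding sepr_def
  proof (intro conjI ballI impI)
    show "A \<inter> (B - {b}) = {}" using AB by blast
    show "A \<union> (B - {b}) = verts G - {w, b}" using AB assms(4,5) by blast
    show "A \<noteq> {}" using assms(4) by blast
    show "B - {b} \<noteq> {}" using nb assms(5) by blast
  next
    fix e assume e: "e \<in> edges G - {}" "ends G e \<inter> {w, b} = {}"
    then have "e \<noteq> g" using assms(6) by auto
    then have "ends G e \<subseteq> A \<or> ends G e \<subseteq> B" using ed e by auto
    then show "ends G e \<subseteq> A \<or> ends G e \<subseteq> B - {b}" using e(2) by blast
  qed
  moreover have "card {w, b} \<le> 2" by (simp add: card_insert_if)
  ultimately show False using L2[OF assms(1,2), of "{w, b}"] by blast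
qed

lemma L4:
  assumes "mgraph G" "three_connected G" "sepr G {w} {g} A B"
  shows False
proof -
  from sepr_insert[of G "{w}" g "{}" A B] assms(3)
  have "sepr G {w} {} A B \<or> (g \<in> edges G \<and> ends G g \<inter> {w} = {} \<and> \<not> ends G g \<subseteq> A \<and> \<not> ends G g \<subseteq> B)"
    by simp
  then show False
  proof
    assume s0: "sepr G {w} {} A B"
    show False by (rule L2[OF assms(1,2) _ _ s0]) simp_all
  next
    assume g: "g \<in> edges G \<and> ends G g \<inter> {w} = {} \<and> \<not> ends G g \<subseteq> A \<and> \<not> ends G g \<subseteq> B"
    then have gE: "g \<in> edges G" by simp
    obtain x y where xy: "x \<noteq> y" "ends G g = {x, y}" using mgraph_two[OF assms(1) gE] by blast
    have AB: "A \<inter> B = {}" "A \<union> B = verts G - {w}" using assms(3) unfolding sepr_def by auto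
    have "ends G g \<subseteq> verts G" using mgraph_ends[OF assms(1) gE] .
    then have sub: "ends G g \<subseteq> A \<union> B" using g AB(2) by blast
    have "\<exists>a b. a \<in> A \<and> b \<in> B \<and> ends G g = {a, b}"
    proof (cases "x \<in> A")
      case True
      then have "y \<notin> A" using g xy by auto
      then have "y \<in> B" using sub xy by auto
      then show ?thesis using True xy by blast
    next
      case False
      then have "x \<in> B" using sub xy by auto
      have "y \<notin> B" using g xy \<open>x \<in> B\<close> by auto
      then have "y \<in> A" using sub xy by auto
      then show ?thesis using \<open>x \<in> B\<close> xy by (metis insert_commute)
    qed
    then obtain a b where ab: "a \<in> A" "b \<in> B" "ends G g = {a, b}" by blast
    have "B = {b}" using L4_aux[OF assms ab] .
    moreover have "A = {a}" using L4_aux[OF assms(1,2) sepr_sym[OF assms(3)] ab(2,1)] ab(3)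
      by (metis insert_commute)
    ultimately have "verts G - {w} = {a, b}" using AB by auto
    then have "verts G \<subseteq> {w, a, b}" by blast
    then have "card (verts G) \<le> card {w, a, b}" by (intro card_mono) auto
    also have "\<dots> \<le> 3" by (simp add: card_insert_if)
    finally show False using assms(2) unfolding three_connected_def by simp
  qed
qed


lemma ends_finite: assumes "mgraph G" "e \<in> edges G" shows "finite (ends G e)"
proof -
  have "card (ends G e) = 2" using mgraph_card[OF assms] .
  then show ?thesis by (intro card_ge_0_finite) simp
qed

lemma card_ends_minus: assumes "mgraph G" "e \<in> edges G" "w \<in> ends G e" shows "card (ends G e - {w}) = 1"
  using mgraph_card[OF assms(1,2)] assms(3) by (simp add: card_Diff_singleton)

lemma L5b:
  assumes "mgraph G" "three_connected G" "sepr G {} {g, h} A B" "g \<in> edges G" "w \<in> ends G g" "w \<in> A"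
  shows False
proof -
  have AB: "A \<inter> B = {}" "A \<union> B = verts G" using assms(3) unfolding sepr_def by auto
  have ed: "\<forall>e \<in> edges G - {g, h}. ends G e \<subseteq> A \<or> ends G e \<subseteq> B"
    using assms(3) unfolding sepr_def by auto
  have wB: "w \<notin> B" using AB(1) assms(6) by blast
  show False
  proof (cases "A - {w} = {}")
    case False
    have "sepr G {w} {h} (A - {w}) B"
      unfolding sepr_def
    proof (intro conjI ballI impI)
      show "(A - {w}) \<inter> B = {}" using AB by blast
      show "(A - {w}) \<union> B = verts G - {w}" using AB wB by blast
      show "A - {w} \<noteq> {}" using False .
      show "B \<noteq> {}" using assms(3) unfolding sepr_def by simp
    next
      fix e assume e: "e \<in> edges G - {h}" "ends G e \<inter> {w} = {}"
      then have "e \<noteq> g" using assms(5) by blast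
      then have "ends G e \<subseteq> A \<or> ends G e \<subseteq> B" using ed e(1) by blast
      then show "ends G e \<subseteq> A - {w} \<or> ends G e \<subseteq> B" using e(2) by blast
    qed
    then show False using L4[OF assms(1,2)] by blast
  next
    case True
    then have Aw: "A = {w}" using assms(6) by blast
    define N where "N = (ends G g - {w}) \<union> (if h \<in> edges G \<and> w \<in> ends G h then ends G h - {w} else {})"
    have fin: "finite N" unfolding N_def using ends_finite[OF assms(1)] assms(4) by simp
    have c1: "card (ends G g - {w}) = 1" using card_ends_minus[OF assms(1,4,5)] .
    have c2: "card (if h \<in> edges G \<and> w \<in> ends G h then ends G h - {w} else {}) \<le> 1"
      using card_ends_minus[OF assms(1), of h w] by (cases "h \<in> edges G \<and> w \<in> ends G h") auto
    have "card N \<le> 2" unfolding N_def using c1 c2 card_Un_le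
      by (metis (no_types, lifting) add_mono le_trans one_add_one order_refl)
    moreover have "w \<notin> N" unfolding N_def by simp
    moreover have "\<forall>e\<in>edges G. w \<in> ends G e \<longrightarrow> ends G e \<subseteq> insert w N"
    proof (intro ballI impI)
      fix e assume e: "e \<in> edges G" "w \<in> ends G e"
      show "ends G e \<subseteq> insert w N"
      proof (cases "e = g \<or> e = h")
        case True
        then show ?thesis unfolding N_def using e by auto
      next
        case False
        then have o: "ends G e \<subseteq> A \<or> ends G e \<subseteq> B" using ed e(1) by blast
        have "\<not> ends G e \<subseteq> B" using e(2) wB by blast
        with o have "ends G e \<subseteq> {w}" using Aw by simp
        then have "card (ends G e) \<le> card {w}" by (intro card_mono) auto
        then show ?thesis using mgraph_card[OF assms(1) e(1)] by simp
      qed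
    qed
    moreover have "w \<in> verts G" using AB assms(6) by blast
    ultimately show False using L3[OF assms(1,2) _ fin] by blast
  qed
qed

lemma L5:
  assumes "mgraph G" "three_connected G" "sepr G {} {g, h} A B"
  shows False
proof -
  have AB: "A \<union> B = verts G" using assms(3) unfolding sepr_def by auto
  have gen: False if s1: "sepr G {} {g', h'} A' B'" and g1: "g' \<in> edges G" for g' h' A' B'
  proof -
    obtain x y where xy: "ends G g' = {x, y}" using mgraph_two[OF assms(1) g1] by blast
    have "x \<in> verts G" using mgraph_ends[OF assms(1) g1] xy by blast
    moreover have "A' \<union> B' = verts G" using s1 unfolding sepr_def by auto
    ultimately have "x \<in> A' \<or> x \<in> B'" by blast
    moreover have "x \<in> ends G g'" using xy by simp
    ultimately show False
      using L5b[OF assms(1,2) s1 g1] L5b[OF assms(1,2) sepr_sym[OF s1] g1] by blast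
  qed
  show False
  proof (cases "g \<in> edges G")
    case True then show ?thesis using gen assms(3) by blast
  next
    case False
    show ?thesis
    proof (cases "h \<in> edges G")
      case True then show ?thesis using gen[of h g] assms(3) by (simp add: insert_commute)
    next
      case False
      have s0: "sepr G {} {} A B" using assms(3) \<open>g \<notin> edges G\<close> False unfolding sepr_def by blast
      show False by (rule L2[OF assms(1,2) _ _ s0]) simp_all
    qed
  qed
qed




lemma two_elems:
  assumes "card X = 2" "x \<in> X" "y \<in> X" "x \<noteq> y" shows "X = {x, y}"
proof -
  have f: "finite X" using assms(1) by (intro card_ge_0_finite) simp
  have "{x, y} \<subseteq> X" using assms by simp
  moreover have "card {x, y} = card X" using assms by simp
  ultimately show ?thesis using f by (metis card_subset_eq)
qed

lemma cross_ab:
  assumes "mgraph G" "e \<in> edges G" "ends G e \<subseteq> A \<union> B" "A \<inter> B = {}"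
    "\<not> ends G e \<subseteq> A" "\<not> ends G e \<subseteq> B"
  shows "\<exists>a b. a \<in> A \<and> b \<in> B \<and> ends G e = {a, b}"
proof -
  obtain x y where xy: "x \<noteq> y" "ends G e = {x, y}" using mgraph_two[OF assms(1,2)] by blast
  show ?thesis
  proof (cases "x \<in> A")
    case True
    then have "y \<notin> A" using assms(5) xy by auto
    then have "y \<in> B" using assms(3) xy by auto
    then show ?thesis using True xy by blast
  next
    case False
    then have "x \<in> B" using assms(3) xy by auto
    have "y \<notin> B" using assms(6) xy \<open>x \<in> B\<close> by auto
    then have "y \<in> A" using assms(3) xy by auto
    then show ?thesis using \<open>x \<in> B\<close> xy by (metis insert_commute)
  qed
qed

lemma diff_ne: "finite X \<Longrightarrow> card X < card V \<Longrightarrow> V - X \<noteq> {}"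
proof
  assume "finite X" "card X < card V" "V - X = {}"
  then have "V \<subseteq> X" by blast
  then have "card V \<le> card X" using \<open>finite X\<close> by (rule card_mono[rotated])
  with \<open>card X < card V\<close> show False by simp
qed

lemma L7:
  assumes "mgraph G" "three_connected G" "f \<in> edges G" "\<not> two_half_connected (del_edges G {f})"
  shows "\<exists>w\<in>verts G. \<exists>g\<in>edges G - {f}. \<exists>A B. sepr G {w} {f, g} A B"
proof -
  let ?H = "del_edges G {f}"
  have c3: "card (verts G) > 3" using assms(2) unfolding three_connected_def by blast
  then have ne: "verts G \<noteq> {}" by auto
  have conn: "connected ?H"
  proof -
    have "\<not> (\<exists>A B. sepr G {} {f} A B)"
    proof
      assume "\<exists>A B. sepr G {} {f} A B"
      then obtain A B where "sepr G {} {f, f} A B" by auto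
      then show False using L5[OF assms(1,2)] by blast
    qed
    then show ?thesis using conn_iff_edges[OF assms(1)] ne by blast
  qed
  have bic: "biconnected ?H"
    unfolding biconnected_def
  proof (intro conjI ballI impI)
    show "connected ?H" by (rule conn)
  next
    fix u v w assume u: "u \<in> verts ?H" and v: "v \<in> verts ?H" and w: "w \<in> verts ?H"
      and d: "u \<noteq> v \<and> u \<noteq> w \<and> v \<noteq> w"
    have "\<not> (\<exists>A B. sepr G {w} {f} A B)" using L4[OF assms(1,2)] by blast
    moreover have "verts G - {w} \<noteq> {}" using u d by auto
    ultimately have "connected (del_vert ?H w)" using conn_iff_vert[OF assms(1)] by blast
    moreover have "u \<in> verts (del_vert ?H w)" "v \<in> verts (del_vert ?H w)" using u v d by auto
    ultimately show "(adj (del_vert ?H w))\<^sup>*\<^sup>* u v" unfolding connected_def by blast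
  qed
  have nt: "\<not> triangle ?H" unfolding triangle_def using c3 by simp
  from assms(4) bic nt obtain c e where ce: "c \<in> verts G" "e \<in> edges G - {f}"
    "\<not> connected (del_vert (del_edges ?H {e}) c)"
    unfolding two_half_connected_def by auto
  have "del_edges ?H {e} = del_edges G {f, e}" using del_edges_twice[of G "{f}" "{e}"] by (simp add: insert_commute)
  with ce(3) have "\<not> connected (del_vert (del_edges G {f, e}) c)" by simp
  moreover have "verts G - {c} \<noteq> {}" using diff_ne[of "{c}" "verts G"] c3 by simp
  ultimately obtain A B where "sepr G {c} {f, e} A B" using conn_iff_vert[OF assms(1)] by blast
  then show ?thesis using ce by blast
qed


lemma cross_first:
  assumes "mgraph G" "three_connected G" "sepr G {w} {f, g} A B"
  shows "f \<in> edges G \<and> ends G f \<inter> {w} = {} \<and> \<not> ends G f \<subseteq> A \<and> \<not> ends G f \<subseteq> B"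
  using sepr_insert[of G "{w}" f "{g}" A B] assms(3) L4[OF assms(1,2)] by blast

definition conn_set :: "('v,'e) mgraph \<Rightarrow> 'v set \<Rightarrow> bool" where
  "conn_set G X \<longleftrightarrow> (\<forall>P. P \<subseteq> X \<and> P \<noteq> {} \<and> P \<noteq> X \<longrightarrow>
     (\<exists>e\<in>edges G. ends G e \<subseteq> X \<and> ends G e \<inter> P \<noteq> {} \<and> ends G e \<inter> (X - P) \<noteq> {}))"

lemma L9:
  assumes "mgraph G" "f \<in> F" "\<forall>X Y. \<not> sepr G W (F - {f}) X Y" "sepr G W F A B"
    "P \<subseteq> A" "P \<noteq> {}" "P \<noteq> A"
    "\<forall>e\<in>edges G - F. ends G e \<inter> W = {} \<longrightarrow> ends G e \<subseteq> P \<or> ends G e \<inter> P = {}"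
  shows False
proof -
  define Q where "Q = A - P"
  have AB: "A \<inter> B = {}" "A \<union> B = verts G - W" "A \<noteq> {}" "B \<noteq> {}" using assms(4) unfolding sepr_def by auto
  have ed: "\<forall>e\<in>edges G - F. ends G e \<inter> W = {} \<longrightarrow> ends G e \<subseteq> A \<or> ends G e \<subseteq> B"
    using assms(4) unfolding sepr_def by auto
  have Qne: "Q \<noteq> {}" unfolding Q_def using assms(5,7) by blast
  have Fi: "F = insert f (F - {f})" using assms(2) by blast
  have crosses: "ends G f \<inter> X \<noteq> {}" if s: "sepr G W F X Y" for X Y
  proof -
    have "sepr G W (insert f (F - {f})) X Y" using s Fi by simp
    from sepr_insert[OF this] assms(3) have "f \<in> edges G \<and> ends G f \<inter> W = {} \<and> \<not> ends G f \<subseteq> Y"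
      by blast
    moreover have "X \<union> Y = verts G - W" using s unfolding sepr_def by simp
    moreover have "ends G f \<subseteq> verts G" if "f \<in> edges G" using mgraph_ends[OF assms(1) that] .
    ultimately show ?thesis by blast
  qed
  have s1: "sepr G W F P (Q \<union> B)"
    unfolding sepr_def
  proof (intro conjI ballI impI)
    show "P \<inter> (Q \<union> B) = {}" unfolding Q_def using AB assms(5) by blast
    show "P \<union> (Q \<union> B) = verts G - W" unfolding Q_def using AB assms(5) by blast
    show "P \<noteq> {}" using assms(6) .
    show "Q \<union> B \<noteq> {}" using AB by blast
  next
    fix e assume e: "e \<in> edges G - F" "ends G e \<inter> W = {}"
    have "ends G e \<subseteq> verts G" using e mgraph_ends[OF assms(1)] by blast
    then have "ends G e \<subseteq> P \<union> (Q \<union> B)" using e(2) AB(2) assms(5) unfolding Q_def by blast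
    then show "ends G e \<subseteq> P \<or> ends G e \<subseteq> Q \<union> B" using assms(8) e by blast
  qed
  have s2: "sepr G W F Q (P \<union> B)"
    unfolding sepr_def
  proof (intro conjI ballI impI)
    show "Q \<inter> (P \<union> B) = {}" unfolding Q_def using AB assms(5) by blast
    show "Q \<union> (P \<union> B) = verts G - W" unfolding Q_def using AB assms(5) by blast
    show "Q \<noteq> {}" using Qne .
    show "P \<union> B \<noteq> {}" using AB by blast
  next
    fix e assume e: "e \<in> edges G - F" "ends G e \<inter> W = {}"
    have o1: "ends G e \<subseteq> A \<or> ends G e \<subseteq> B" using ed e by blast
    have o2: "ends G e \<subseteq> P \<or> ends G e \<inter> P = {}" using assms(8) e by blast
    show "ends G e \<subseteq> Q \<or> ends G e \<subseteq> P \<union> B"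
    proof (cases "ends G e \<subseteq> B")
      case True then show ?thesis by blast
    next
      case False
      then have "ends G e \<subseteq> A" using o1 by blast
      then show ?thesis using o2 unfolding Q_def by blast
    qed
  qed
  have s3: "sepr G W F B A" using sepr_sym[OF assms(4)] .
  obtain p where p: "p \<in> ends G f" "p \<in> P" using crosses[OF s1] by blast
  obtain q where q: "q \<in> ends G f" "q \<in> Q" using crosses[OF s2] by blast
  obtain b where b: "b \<in> ends G f" "b \<in> B" using crosses[OF s3] by blast
  have fE: "f \<in> edges G"
    using sepr_insert[of G W f "F - {f}" B A] s3 Fi assms(3) by auto
  have d: "p \<noteq> q" "p \<noteq> b" "q \<noteq> b" using p q b AB(1) assms(5) unfolding Q_def by blast+
  have "{p, q, b} \<subseteq> ends G f" using p q b by simp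
  then have "card {p, q, b} \<le> card (ends G f)" using ends_finite[OF assms(1) fE] by (rule card_mono[rotated])
  then show False using d mgraph_card[OF assms(1) fE] by simp
qed

lemma L10_comp:
  assumes "mgraph G" "F \<noteq> {}" "\<forall>f\<in>F. \<forall>X Y. \<not> sepr G W (F - {f}) X Y" "sepr G W F A B" "v \<in> A"
  shows "comp_of (del_verts (del_edges G F) W) v = A"
proof -
  let ?H = "del_verts (del_edges G F) W"
  obtain f where f: "f \<in> F" using assms(2) by blast
  have AB: "A \<union> B = verts G - W" using assms(4) unfolding sepr_def by auto
  have sub: "comp_of ?H v \<subseteq> A" unfolding comp_of_def using reach_stays[OF _ assms(5,4)] by blast
  have vin: "v \<in> comp_of ?H v" unfolding comp_of_def using assms(5) AB by auto
  show ?thesis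
  proof (rule ccontr)
    assume ne: "comp_of ?H v \<noteq> A"
    have "\<forall>e\<in>edges G - F. ends G e \<inter> W = {} \<longrightarrow> ends G e \<subseteq> comp_of ?H v \<or> ends G e \<inter> comp_of ?H v = {}"
    proof (intro ballI impI)
      fix e assume e: "e \<in> edges G - F" "ends G e \<inter> W = {}"
      obtain x y where xy: "ends G e = {x, y}" using mgraph_two[OF assms(1)] e(1) by blast
      have sube: "ends G e \<subseteq> verts G - W" using e mgraph_ends[OF assms(1)] by blast
      have axy: "adj ?H x y" "adj ?H y x" unfolding adj_def using e xy by auto
      show "ends G e \<subseteq> comp_of ?H v \<or> ends G e \<inter> comp_of ?H v = {}"
      proof (cases "x \<in> comp_of ?H v \<or> y \<in> comp_of ?H v")
        case True
        then have "x \<in> comp_of ?H v \<and> y \<in> comp_of ?H v"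
        proof
          assume xA: "x \<in> comp_of ?H v"
          then have "(adj ?H)\<^sup>*\<^sup>* v x" unfolding comp_of_def by simp
          then have "(adj ?H)\<^sup>*\<^sup>* v y" using axy(1) by (rule rtranclp.rtrancl_into_rtrancl)
          then have "y \<in> comp_of ?H v" using sube xy unfolding comp_of_def by simp
          then show ?thesis using xA by simp
        next
          assume yA: "y \<in> comp_of ?H v"
          then have "(adj ?H)\<^sup>*\<^sup>* v y" unfolding comp_of_def by simp
          then have "(adj ?H)\<^sup>*\<^sup>* v x" using axy(2) by (rule rtranclp.rtrancl_into_rtrancl)
          then have "x \<in> comp_of ?H v" using sube xy unfolding comp_of_def by simp
          then show ?thesis using yA by simp
        qed
        then show ?thesis using xy by simp
      next
        case False then show ?thesis using xy by simp
      qed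
    qed
    then show False using L9[OF assms(1) f _ assms(4) sub _ ne] assms(3) f vin by blast
  qed
qed

lemma L10:
  assumes "mgraph G" "F \<noteq> {}" "\<forall>f\<in>F. \<forall>X Y. \<not> sepr G W (F - {f}) X Y" "sepr G W F A B"
  shows "components (del_verts (del_edges G F) W) = {A, B}"
proof -
  have AB: "A \<union> B = verts G - W" "A \<noteq> {}" "B \<noteq> {}" using assms(4) unfolding sepr_def by auto
  have cA: "\<And>v. v \<in> A \<Longrightarrow> comp_of (del_verts (del_edges G F) W) v = A" using L10_comp[OF assms] .
  have cB: "\<And>v. v \<in> B \<Longrightarrow> comp_of (del_verts (del_edges G F) W) v = B"
    using L10_comp[OF assms(1,2,3) sepr_sym[OF assms(4)]] .
  have "comp_of (del_verts (del_edges G F) W) ` (A \<union> B) = {A, B}"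
  proof
    show "comp_of (del_verts (del_edges G F) W) ` (A \<union> B) \<subseteq> {A, B}" using cA cB by blast
    have "A \<in> comp_of (del_verts (del_edges G F) W) ` (A \<union> B)" using AB(2) cA by (metis Un_iff all_not_in_conv image_eqI)
    moreover have "B \<in> comp_of (del_verts (del_edges G F) W) ` (A \<union> B)" using AB(3) cB by (metis Un_iff all_not_in_conv image_eqI)
    ultimately show "{A, B} \<subseteq> comp_of (del_verts (del_edges G F) W) ` (A \<union> B)" by blast
  qed
  then show ?thesis unfolding components_def using AB(1) by simp
qed

lemma L10_conn:
  assumes "mgraph G" "F \<noteq> {}" "\<forall>f\<in>F. \<forall>X Y. \<not> sepr G W (F - {f}) X Y" "sepr G W F A B"
  shows "conn_set G A"
  unfolding conn_set_def
proof (intro allI impI)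
  fix P assume P: "P \<subseteq> A \<and> P \<noteq> {} \<and> P \<noteq> A"
  obtain f where f: "f \<in> F" using assms(2) by blast
  have AB: "A \<inter> B = {}" using assms(4) unfolding sepr_def by auto
  have ed: "\<forall>e\<in>edges G - F. ends G e \<inter> W = {} \<longrightarrow> ends G e \<subseteq> A \<or> ends G e \<subseteq> B"
    using assms(4) unfolding sepr_def by auto
  show "\<exists>e\<in>edges G. ends G e \<subseteq> A \<and> ends G e \<inter> P \<noteq> {} \<and> ends G e \<inter> (A - P) \<noteq> {}"
  proof (rule ccontr)
    assume nn: "\<not> ?thesis"
    have "\<forall>e\<in>edges G - F. ends G e \<inter> W = {} \<longrightarrow> ends G e \<subseteq> P \<or> ends G e \<inter> P = {}"
    proof (intro ballI impI)
      fix e assume e: "e \<in> edges G - F" "ends G e \<inter> W = {}"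
      show "ends G e \<subseteq> P \<or> ends G e \<inter> P = {}"
      proof (cases "ends G e \<subseteq> A")
        case True
        then show ?thesis using nn e(1) by blast
      next
        case False
        then have "ends G e \<subseteq> B" using ed e by blast
        then show ?thesis using P AB by blast
      qed
    qed
    then show False using L9[OF assms(1) f _ assms(4)] assms(3) f P by blast
  qed
qed


lemma L6:
  assumes "mgraph G" "three_connected G" "\<forall>f\<in>edges G. \<not> two_half_connected (del_edges G {f})"
    "p \<in> edges G" "q \<in> edges G" "p \<noteq> q" "ends G p = ends G q"
  shows False
proof -
  obtain w g A B where w: "w \<in> verts G" and g: "g \<in> edges G - {p}" and s: "sepr G {w} {p, g} A B"
    using L7[OF assms(1,2,4)] assms(3,4) by blast
  have AB: "A \<inter> B = {}" "A \<union> B = verts G - {w}" using s unfolding sepr_def by auto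
  have ed: "\<forall>e\<in>edges G - {p, g}. ends G e \<inter> {w} = {} \<longrightarrow> ends G e \<subseteq> A \<or> ends G e \<subseteq> B"
    using s unfolding sepr_def by auto
  have cr: "p \<in> edges G \<and> ends G p \<inter> {w} = {} \<and> \<not> ends G p \<subseteq> A \<and> \<not> ends G p \<subseteq> B"
    using cross_first[OF assms(1,2) s] .
  have "ends G p \<subseteq> A \<union> B" using cr AB(2) mgraph_ends[OF assms(1) assms(4)] by blast
  then obtain a b where ab: "a \<in> A" "b \<in> B" "ends G p = {a, b}"
    using cross_ab[OF assms(1,4) _ AB(1)] cr by blast
  have qg: "q = g"
  proof (rule ccontr)
    assume "q \<noteq> g"
    then have "q \<in> edges G - {p, g}" using assms(5,6) by blast
    then have "ends G q \<subseteq> A \<or> ends G q \<subseteq> B" using ed cr assms(7) by auto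
    then show False using cr assms(7) by simp
  qed
  have bw: "b \<noteq> w" "b \<noteq> a" using ab AB by blast+
  have Bb: "B = {b}"
  proof (rule ccontr)
    assume nb: "B \<noteq> {b}"
    have "sepr G {w, b} {} A (B - {b})"
      unfolding sepr_def
    proof (intro conjI ballI impI)
      show "A \<inter> (B - {b}) = {}" using AB by blast
      show "A \<union> (B - {b}) = verts G - {w, b}" using AB ab by blast
      show "A \<noteq> {}" using ab by blast
      show "B - {b} \<noteq> {}" using nb ab by blast
    next
      fix e assume e: "e \<in> edges G - {}" "ends G e \<inter> {w, b} = {}"
      then have "e \<noteq> p" "e \<noteq> g" using ab assms(7) qg by auto
      then have "ends G e \<subseteq> A \<or> ends G e \<subseteq> B" using ed e by auto
      then show "ends G e \<subseteq> A \<or> ends G e \<subseteq> B - {b}" using e(2) by blast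
    qed
    moreover have "card {w, b} \<le> 2" by (simp add: card_insert_if)
    ultimately show False using L2[OF assms(1,2), of "{w, b}"] by blast
  qed
  have "\<forall>e\<in>edges G. b \<in> ends G e \<longrightarrow> ends G e \<subseteq> insert b {a, w}"
  proof (intro ballI impI)
    fix e assume e: "e \<in> edges G" "b \<in> ends G e"
    show "ends G e \<subseteq> insert b {a, w}"
    proof (cases "e = p \<or> e = g")
      case True then show ?thesis using ab assms(7) qg by auto
    next
      case False
      show ?thesis
      proof (cases "w \<in> ends G e")
        case True
        have "ends G e = {b, w}" by (rule two_elems[OF mgraph_card[OF assms(1) e(1)] e(2) True bw(1)])
        then show ?thesis by blast
      next
        case wn: False
        then have "ends G e \<subseteq> A \<or> ends G e \<subseteq> B" using ed e False by auto
        moreover have "\<not> ends G e \<subseteq> A" using e(2) ab(2) AB(1) by blast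
        ultimately have "ends G e \<subseteq> {b}" using Bb by simp
        then have "card (ends G e) \<le> card {b}" by (intro card_mono) auto
        then show ?thesis using mgraph_card[OF assms(1) e(1)] by simp
      qed
    qed
  qed
  moreover have "b \<in> verts G" using ab AB by blast
  moreover have "card {a, w} \<le> 2" by (simp add: card_insert_if)
  ultimately show False using L3[OF assms(1,2), of b "{a, w}"] bw by simp
qed



lemma tc_thc:
  assumes "mgraph K" "three_connected K"
  shows "two_half_connected K"
proof -
  have c3: "card (verts K) > 3" using assms(2) unfolding three_connected_def by blast
  then have ne: "verts K \<noteq> {}" by auto
  have conn: "connected K"
  proof -
    have "\<not> (\<exists>A B. sepr K {} {} A B)" using L2[OF assms, of "{}"] by auto
    then have "connected (del_edges K {})" using conn_iff_edges[OF assms(1)] ne by blast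
    moreover have "del_edges K {} = K" unfolding del_edges_def by simp
    ultimately show ?thesis by simp
  qed
  have bic: "biconnected K"
    unfolding biconnected_def
  proof (intro conjI ballI impI)
    show "connected K" by (rule conn)
  next
    fix u v w assume u: "u \<in> verts K" and v: "v \<in> verts K" and w: "w \<in> verts K"
      and d: "u \<noteq> v \<and> u \<noteq> w \<and> v \<noteq> w"
    have "\<not> (\<exists>A B. sepr K {w} {} A B)" using L2[OF assms, of "{w}"] by auto
    moreover have "verts K - {w} \<noteq> {}" using u d by auto
    ultimately have "connected (del_vert (del_edges K {}) w)" using conn_iff_vert[OF assms(1)] by blast
    moreover have "del_edges K {} = K" unfolding del_edges_def by simp
    ultimately have "connected (del_vert K w)" by simp
    moreover have "u \<in> verts (del_vert K w)" "v \<in> verts (del_vert K w)" using u v d by auto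
    ultimately show "(adj (del_vert K w))\<^sup>*\<^sup>* u v" unfolding connected_def by blast
  qed
  have nt: "\<not> triangle K" unfolding triangle_def using c3 by simp
  have "connected (del_vert (del_edges K {e}) c)" if "c \<in> verts K" "e \<in> edges K" for c e
  proof -
    have "\<not> (\<exists>A B. sepr K {c} {e} A B)" using L4[OF assms] by blast
    moreover have "verts K - {c} \<noteq> {}" using diff_ne[of "{c}" "verts K"] c3 by simp
    ultimately show ?thesis using conn_iff_vert[OF assms(1)] by blast
  qed
  then show ?thesis unfolding two_half_connected_def using bic nt by blast
qed

lemma build:
  assumes "mgraph K" "w' \<in> verts K" "A' \<inter> B' = {}" "A' \<union> B' = verts K - {w'}" "A' \<noteq> {}" "B' \<noteq> {}"
    "g0 \<in> edges K - {f1}"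
    "\<forall>e\<in>edges K - {f1}. \<forall>e'\<in>edges K - {f1}. w' \<notin> ends K e \<and> \<not> ends K e \<subseteq> A' \<and> \<not> ends K e \<subseteq> B' \<and>
        w' \<notin> ends K e' \<and> \<not> ends K e' \<subseteq> A' \<and> \<not> ends K e' \<subseteq> B' \<longrightarrow> e = e'"
  shows "\<not> two_half_connected (del_edges K {f1})"
proof -
  define P where "P = (\<lambda>e. w' \<notin> ends K e \<and> \<not> ends K e \<subseteq> A' \<and> \<not> ends K e \<subseteq> B')"
  define g' where "g' = (if \<exists>e\<in>edges K - {f1}. P e then (SOME e. e \<in> edges K - {f1} \<and> P e) else g0)"
  have g'E: "g' \<in> edges K - {f1}"
  proof (cases "\<exists>e\<in>edges K - {f1}. P e")
    case True
    then have ex': "\<exists>e. e \<in> edges K - {f1} \<and> P e" by blast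
    have "g' = (SOME e. e \<in> edges K - {f1} \<and> P e)" using True unfolding g'_def by simp
    then show ?thesis using someI_ex[OF ex'] by simp
  next
    case False then show ?thesis unfolding g'_def using assms(7) by simp
  qed
  have only: "e = g'" if "e \<in> edges K - {f1}" "P e" for e
  proof -
    have ex: "\<exists>e\<in>edges K - {f1}. P e" using that by blast
    then have ex': "\<exists>e. e \<in> edges K - {f1} \<and> P e" by blast
    have "g' = (SOME e. e \<in> edges K - {f1} \<and> P e)" using ex unfolding g'_def by simp
    then have Pg: "g' \<in> edges K - {f1} \<and> P g'" using someI_ex[OF ex'] by simp
    have c: "w' \<notin> ends K e \<and> \<not> ends K e \<subseteq> A' \<and> \<not> ends K e \<subseteq> B' \<and>
        w' \<notin> ends K g' \<and> \<not> ends K g' \<subseteq> A' \<and> \<not> ends K g' \<subseteq> B'"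
      using that(2) Pg unfolding P_def by simp
    show ?thesis using assms(8)[rule_format, OF that(1) conjunct1[OF Pg] c] .
  qed
  have "sepr K {w'} {f1, g'} A' B'"
    unfolding sepr_def
  proof (intro conjI ballI impI)
    show "A' \<inter> B' = {}" "A' \<union> B' = verts K - {w'}" "A' \<noteq> {}" "B' \<noteq> {}" using assms(3-6) by auto
  next
    fix e assume e: "e \<in> edges K - {f1, g'}" "ends K e \<inter> {w'} = {}"
    show "ends K e \<subseteq> A' \<or> ends K e \<subseteq> B'"
    proof (rule ccontr)
      assume "\<not> ?thesis"
      then have "P e" unfolding P_def using e(2) by blast
      then have "e = g'" using only e(1) by blast
      then show False using e(1) by blast
    qed
  qed
  then have "\<not> connected (del_vert (del_edges K {f1, g'}) w')" using conn_iff_vert[OF assms(1)] by blast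
  moreover have "del_edges (del_edges K {f1}) {g'} = del_edges K {f1, g'}"
    using del_edges_twice[of K "{f1}" "{g'}"] by (simp add: insert_commute)
  ultimately have "\<not> connected (del_vert (del_edges (del_edges K {f1}) {g'}) w')" by simp
  moreover have "w' \<in> verts (del_edges K {f1})" "g' \<in> edges (del_edges K {f1})" using assms(2) g'E by auto
  ultimately show ?thesis unfolding two_half_connected_def by blast
qed

locale piece =
  fixes G :: "('v,'e) mgraph" and S X :: "'v set" and ts :: "'v list"
  assumes mg: "mgraph G" and tc: "three_connected G"
    and SX: "S \<inter> X = {}" "S \<union> X = verts G"
    and X2: "card X \<ge> 2" and S3: "card S \<ge> 3"
    and ts: "length ts = 3" "distinct ts" "set ts \<subseteq> S"
    and A4: "\<forall>e\<in>edges G. ends G e \<inter> S \<noteq> {} \<and> ends G e \<inter> X \<noteq> {} \<longrightarrow> (\<exists>t\<in>set ts. t \<in> ends G e)"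
    and A5: "\<forall>t\<in>set ts. \<exists>e\<in>edges G. t \<in> ends G e \<and> ends G e \<inter> X \<noteq> {}"
    and A6: "conn_set G X"
    and A7: "\<forall>t\<in>set ts. \<forall>z. z \<noteq> t \<longrightarrow> (\<exists>e\<in>edges G. t \<in> ends G e \<and> ends G e \<subseteq> S \<and> z \<notin> ends G e)"
begin

definition H where "H = glue G S (map (\<lambda>x. {x}) ts)"

lemma H_verts: "verts H = insert None (Some ` S)"
  unfolding H_def glue_def by simp

lemma H_edges: "edges H = Inl ` {e \<in> edges G. ends G e \<subseteq> S} \<union> Inr ` {0..<3}"
  unfolding H_def glue_def using ts(1) by simp

lemma H_Inl: "ends H (Inl e) = Some ` ends G e"
  unfolding H_def glue_def by simp

lemma H_Inr: "i < 3 \<Longrightarrow> ends H (Inr i) = {None, Some (ts ! i)}"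
  unfolding H_def glue_def using ts(1) by simp

lemma finV: "finite (verts G)" using mg unfolding mgraph_def by blast
lemma finS: "finite S" using finV SX(2) by (metis finite_Un)
lemma finX: "finite X" using finV SX(2) by (metis finite_Un)
lemma Xne: "X \<noteq> {}" using X2 by auto

lemma H_mgraph: "mgraph H"
  unfolding mgraph_def
proof (intro conjI)
  show "finite (verts H)" using finS H_verts by simp
  show "finite (edges H)" unfolding H_edges using mg unfolding mgraph_def by simp
  show "\<forall>e1\<in>edges H. ends H e1 \<subseteq> verts H \<and> card (ends H e1) = 2"
  proof
  fix e1 assume e1: "e1 \<in> edges H"
  then consider (l) e where "e1 = Inl e" "e \<in> edges G" "ends G e \<subseteq> S" | (r) i where "e1 = Inr i" "i < 3"
    unfolding H_edges by auto
  then show "ends H e1 \<subseteq> verts H \<and> card (ends H e1) = 2"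
  proof cases
    case l
    have "card (Some ` ends G e) = card (ends G e)" by (rule card_image) simp
    then show ?thesis using l H_Inl H_verts mgraph_card[OF mg l(2)] by auto
  next
    case r
    have "ts ! i \<in> S" using ts r by (metis nth_mem subsetD)
    then show ?thesis using r H_Inr H_verts by auto
  qed
  qed
qed

lemma ts_in: "i < 3 \<Longrightarrow> ts ! i \<in> S" using ts by (metis nth_mem subsetD)

lemma ts_idx: "t \<in> set ts \<Longrightarrow> \<exists>i<3. ts ! i = t" using ts(1) by (metis in_set_conv_nth)

lemma ts_inj: "i < 3 \<Longrightarrow> j < 3 \<Longrightarrow> ts ! i = ts ! j \<Longrightarrow> i = j"
  using ts(1,2) nth_eq_iff_index_eq by metis

lemma mixed_edge:
  assumes "e \<in> edges G" "\<not> ends G e \<subseteq> S" "\<not> ends G e \<subseteq> X"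
  shows "\<exists>i<3. \<exists>x\<in>X. ends G e = {ts ! i, x}"
proof -
  have sub: "ends G e \<subseteq> S \<union> X" using mgraph_ends[OF mg assms(1)] SX(2) by simp
  have "ends G e \<inter> S \<noteq> {}" "ends G e \<inter> X \<noteq> {}" using sub assms(2,3) by blast+
  then obtain t where t: "t \<in> set ts" "t \<in> ends G e" using A4 assms(1) by blast
  obtain i where i: "i < 3" "ts ! i = t" using ts_idx[OF t(1)] by blast
  obtain x where x: "x \<in> ends G e" "x \<in> X" using \<open>ends G e \<inter> X \<noteq> {}\<close> by blast
  have "t \<in> S" using t ts(3) by blast
  then have "t \<noteq> x" using x SX(1) by blast
  then have "ends G e = {t, x}" using two_elems[OF mgraph_card[OF mg assms(1)] t(2) x(1)] by simp
  then show ?thesis using i x by blast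
qed

lemma edge_cases:
  assumes "e \<in> edges G"
  shows "ends G e \<subseteq> S \<or> ends G e \<subseteq> X \<or> (\<exists>i<3. \<exists>x\<in>X. ends G e = {ts ! i, x})"
  using mixed_edge[OF assms] by blast

lemma Q:
  assumes R0: "R0 \<subseteq> S" "card R0 \<le> 1" "finite R0" and A: "A \<subseteq> S - R0" "A \<noteq> {}"
    and ed: "\<forall>e\<in>edges G. ends G e \<subseteq> S \<and> ends G e \<inter> R0 = {} \<longrightarrow> ends G e \<subseteq> A \<or> ends G e \<inter> A = {}"
    and ct: "card (A \<inter> set ts) \<le> 1"
  shows False
proof (cases "A \<inter> set ts = {}")
  case True
  have "sepr G R0 {} A (verts G - R0 - A)"
    unfolding sepr_def
  proof (intro conjI ballI impI)
    show "A \<inter> (verts G - R0 - A) = {}" by blast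
    show "A \<union> (verts G - R0 - A) = verts G - R0" using A(1) SX(2) by blast
    show "A \<noteq> {}" by (rule A(2))
    have "X \<subseteq> verts G - R0 - A" using SX R0(1) A(1) by blast
    then show "verts G - R0 - A \<noteq> {}" using Xne by blast
  next
    fix e assume e: "e \<in> edges G - {}" "ends G e \<inter> R0 = {}"
    have eV: "ends G e \<subseteq> verts G" using e mgraph_ends[OF mg] by blast
    show "ends G e \<subseteq> A \<or> ends G e \<subseteq> verts G - R0 - A"
    proof (cases "ends G e \<inter> A = {}")
      case True then show ?thesis using eV e(2) by blast
    next
      case False
      then obtain a where a: "a \<in> ends G e" "a \<in> A" by blast
      from edge_cases e(1) consider "ends G e \<subseteq> S" | "ends G e \<subseteq> X" | "\<exists>i<3. \<exists>x\<in>X. ends G e = {ts ! i, x}"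
        by blast
      then show ?thesis
      proof cases
        case 1 then show ?thesis using ed e False by blast
      next
        case 2 then show ?thesis using a A(1) SX(1) by blast
      next
        case 3
        then obtain i x where ix: "i < 3" "x \<in> X" "ends G e = {ts ! i, x}" by blast
        have "a \<noteq> x" using a(2) A(1) ix(2) SX(1) by blast
        then have "a = ts ! i" using a(1) ix(3) by blast
        then have "a \<in> A \<inter> set ts" using a(2) ix(1) ts(1) by simp
        then show ?thesis using True by blast
      qed
    qed
  qed
  then show False using L2[OF mg tc R0(3)] R0(2) by simp
next
  case False
  have "finite (A \<inter> set ts)" by simp
  then have "card (A \<inter> set ts) = 1" using False ct by (metis card_0_eq le_antisym less_one not_le)
  then obtain t where t: "A \<inter> set ts = {t}" using card_1_singletonE by blast
  then have tA: "t \<in> A" and tts: "t \<in> set ts" by auto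
  show False
  proof (cases "A = {t}")
    case True
    obtain z where z: "z \<noteq> t" "R0 \<subseteq> {z}"
    proof (cases "R0 = {}")
      case True
      have "card (set ts) = 3" using ts(1,2) distinct_card by metis
      then have "set ts - {t} \<noteq> {}" using diff_ne[of "{t}" "set ts"] by simp
      then obtain z where "z \<in> set ts" "z \<noteq> t" by blast
      then show ?thesis using that True by blast
    next
      case False
      then have "card R0 = 1" using R0(2,3) by (metis card_0_eq le_antisym less_one not_le)
      then obtain r where r: "R0 = {r}" using card_1_singletonE by blast
      have "r \<noteq> t" using tA A(1) r by blast
      then show ?thesis using that r by blast
    qed
    obtain e where e: "e \<in> edges G" "t \<in> ends G e" "ends G e \<subseteq> S" "z \<notin> ends G e"
      using A7 tts z(1) by blast
    have "ends G e \<inter> R0 = {}" using e(4) z(2) by blast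
    then have "ends G e \<subseteq> A \<or> ends G e \<inter> A = {}" using ed e(1,3) by blast
    then have "ends G e \<subseteq> {t}" using e(2) tA True by blast
    then have "card (ends G e) \<le> card {t}" by (intro card_mono) auto
    then show False using mgraph_card[OF mg e(1)] by simp
  next
    case False
    define A' where "A' = A - {t}"
    have A'ne: "A' \<noteq> {}" unfolding A'_def using False tA by blast
    have "sepr G (insert t R0) {} A' (verts G - insert t R0 - A')"
      unfolding sepr_def
    proof (intro conjI ballI impI)
      show "A' \<inter> (verts G - insert t R0 - A') = {}" by blast
      show "A' \<union> (verts G - insert t R0 - A') = verts G - insert t R0" using A(1) SX(2) unfolding A'_def by blast
      show "A' \<noteq> {}" by (rule A'ne)
      have "X \<subseteq> verts G - insert t R0 - A'" using SX R0(1) A(1) tA unfolding A'_def by blast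
      then show "verts G - insert t R0 - A' \<noteq> {}" using Xne by blast
    next
      fix e assume e: "e \<in> edges G - {}" "ends G e \<inter> insert t R0 = {}"
      have eV: "ends G e \<subseteq> verts G" using e mgraph_ends[OF mg] by blast
      show "ends G e \<subseteq> A' \<or> ends G e \<subseteq> verts G - insert t R0 - A'"
      proof (cases "ends G e \<inter> A' = {}")
        case True then show ?thesis using eV e(2) by blast
      next
        case False
        then obtain a where a: "a \<in> ends G e" "a \<in> A'" by blast
        from edge_cases e(1) consider "ends G e \<subseteq> S" | "ends G e \<subseteq> X" | "\<exists>i<3. \<exists>x\<in>X. ends G e = {ts ! i, x}"
          by blast
        then show ?thesis
        proof cases
          case 1
          have "ends G e \<inter> R0 = {}" using e(2) by blast
          then have "ends G e \<subseteq> A" using ed e(1) 1 a unfolding A'_def by blast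
          then show ?thesis using e(2) unfolding A'_def by blast
        next
          case 2 then show ?thesis using a A(1) SX(1) unfolding A'_def by blast
        next
          case 3
          then obtain i x where ix: "i < 3" "x \<in> X" "ends G e = {ts ! i, x}" by blast
          have "a \<noteq> x" using a(2) A(1) ix(2) SX(1) unfolding A'_def by blast
          then have "a = ts ! i" using a(1) ix(3) by blast
          then have "a \<in> A \<inter> set ts" using a(2) ix(1) ts(1) unfolding A'_def by simp
          then have "a = t" using t by blast
          then show ?thesis using a(2) unfolding A'_def by blast
        qed
      qed
    qed
    moreover have "card (insert t R0) \<le> 2" using R0(2,3) by (simp add: card_insert_if)
    ultimately show False using L2[OF mg tc] R0(3) by blast
  qed
qed

definition phi where "phi v = (if v \<in> S then Some v else None)"

lemma pull:
  assumes s: "sepr H R {} A' B'" and R: "R \<subseteq> verts H" "None \<notin> R"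
  shows "sepr G (Some -` R) {} {v \<in> verts G - Some -` R. phi v \<in> A'} {v \<in> verts G - Some -` R. phi v \<in> B'}"
    (is "sepr G ?R0 {} ?A ?B")
proof -
  have AB': "A' \<inter> B' = {}" "A' \<union> B' = verts H - R" "A' \<noteq> {}" "B' \<noteq> {}" using s unfolding sepr_def by auto
  have edH: "\<forall>e\<in>edges H. ends H e \<inter> R = {} \<longrightarrow> ends H e \<subseteq> A' \<or> ends H e \<subseteq> B'"
    using s unfolding sepr_def by auto
  have R0S: "?R0 \<subseteq> S" using R H_verts by auto
  have phiin: "phi v \<in> A' \<union> B'" if "v \<in> verts G - ?R0" for v
  proof (cases "v \<in> S")
    case True then show ?thesis using that AB'(2) H_verts unfolding phi_def by auto
  next
    case False then show ?thesis using that AB'(2) H_verts R(2) unfolding phi_def by auto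
  qed
  have ne: "{v \<in> verts G - ?R0. phi v \<in> Y} \<noteq> {}" if Y1: "Y \<subseteq> verts H - R" and Y2: "Y \<noteq> {}" for Y
  proof -
    obtain y where y: "y \<in> Y" using Y2 by blast
    show ?thesis
    proof (cases y)
      case None
      obtain x where x: "x \<in> X" using Xne by blast
      have xS: "x \<notin> S" using x SX(1) by blast
      have "x \<in> verts G" using x SX(2) by blast
      then have "x \<in> verts G - ?R0" using xS R0S by blast
      moreover have "phi x = None" using xS unfolding phi_def by simp
      ultimately have "x \<in> {v \<in> verts G - ?R0. phi v \<in> Y}" using y None by simp
      then show ?thesis by blast
    next
      case (Some s')
      then have "s' \<in> S" "s' \<notin> ?R0" using y Y1 H_verts by auto
      then have "s' \<in> verts G - ?R0" "phi s' = Some s'" using SX(2) unfolding phi_def by auto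
      then have "s' \<in> {v \<in> verts G - ?R0. phi v \<in> Y}" using y Some by simp
      then show ?thesis by blast
    qed
  qed
  show ?thesis
    unfolding sepr_def
  proof (intro conjI ballI impI)
    show "?A \<inter> ?B = {}" using AB'(1) by blast
    show "?A \<union> ?B = verts G - ?R0" using phiin by blast
    show "?A \<noteq> {}" using ne[of A'] AB' by blast
    show "?B \<noteq> {}" using ne[of B'] AB' by blast
  next
    fix e assume e: "e \<in> edges G - {}" "ends G e \<inter> ?R0 = {}"
    have eV: "ends G e \<subseteq> verts G - ?R0" using e mgraph_ends[OF mg] by blast
    have same: "phi ` ends G e \<subseteq> A' \<or> phi ` ends G e \<subseteq> B'"
    proof -
      from edge_cases e(1) consider "ends G e \<subseteq> S" | "ends G e \<subseteq> X" | "\<exists>i<3. \<exists>x\<in>X. ends G e = {ts ! i, x}"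
        by blast
      then show ?thesis
      proof cases
        case 1
        then have "Inl e \<in> edges H" using e(1) H_edges by auto
        moreover have "ends H (Inl e) \<inter> R = {}" using e(2) H_Inl by auto
        ultimately have "Some ` ends G e \<subseteq> A' \<or> Some ` ends G e \<subseteq> B'" using edH H_Inl by metis
        moreover have "phi ` ends G e = Some ` ends G e" using 1 unfolding phi_def by auto
        ultimately show ?thesis by simp
      next
        case 2
        obtain x y where xy: "ends G e = {x, y}" using mgraph_two[OF mg] e(1) by blast
        have "x \<notin> S" "y \<notin> S" using 2 xy SX(1) by blast+
        then have "phi ` ends G e = {None}" using xy unfolding phi_def by simp
        moreover have "None \<in> A' \<union> B'" using AB'(2) R(2) H_verts by auto
        ultimately show ?thesis by auto
      next
        case 3
        then obtain i x where ix: "i < 3" "x \<in> X" "ends G e = {ts ! i, x}" by blast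
        have tS: "ts ! i \<in> S" using ts_in[OF ix(1)] .
        have "Inr i \<in> edges H" using ix(1) H_edges by auto
        moreover have "ends H (Inr i) \<inter> R = {}" using H_Inr[OF ix(1)] R(2) e(2) ix(3) by auto
        ultimately have "ends H (Inr i) \<subseteq> A' \<or> ends H (Inr i) \<subseteq> B'" using edH by blast
        moreover have "phi ` ends G e = ends H (Inr i)" using H_Inr[OF ix(1)] ix(2,3) tS SX(1)
          unfolding phi_def by auto
        ultimately show ?thesis by simp
      qed
    qed
    show "ends G e \<subseteq> ?A \<or> ends G e \<subseteq> ?B" using same eV by blast
  qed
qed

lemma card_H: "card (verts H) = card S + 1"
proof -
  have "card (Some ` S) = card S" by (rule card_image) simp
  then show ?thesis using H_verts finS by simp
qed

lemma H_tc: "three_connected H"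
  unfolding three_connected_def
proof (intro conjI allI impI)
  show "card (verts H) > 3" using card_H S3 by simp
next
  fix R assume R1: "R \<subseteq> verts H" and R2: "card R \<le> 2"
  note R = R1 R2
  have finR: "finite R" using R finite_subset H_mgraph unfolding mgraph_def by blast
  have "del_verts H R = del_verts (del_edges H {}) R" by (metis del_verts_empty del_edges_eq)
  moreover have "verts H - R \<noteq> {}" using diff_ne[OF finR] R card_H S3 by simp
  moreover have "\<not> (\<exists>A' B'. sepr H R {} A' B')"
  proof
    assume "\<exists>A' B'. sepr H R {} A' B'"
    then obtain A' B' where s: "sepr H R {} A' B'" by blast
    show False
    proof (cases "None \<in> R")
      case False
      let ?R0 = "Some -` R"
      have "finite ?R0" using finR by (simp add: finite_vimageI)
      moreover have "card ?R0 \<le> 2"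
      proof -
        have "card (Some ` ?R0) = card ?R0" by (rule card_image) simp
        moreover have "Some ` ?R0 \<subseteq> R" by auto
        ultimately show ?thesis using R finR by (metis card_mono le_trans)
      qed
      ultimately show False using L2[OF mg tc] pull[OF s] R False by blast
    next
      case True
      let ?R0 = "Some -` R"
      have finR0: "finite ?R0" using finR by (simp add: finite_vimageI)
      have R0S: "?R0 \<subseteq> S" using R H_verts by auto
      have Req: "R = insert None (Some ` ?R0)" using True R H_verts by auto
      have "card (insert None (Some ` ?R0)) = Suc (card (Some ` ?R0))"
        by (rule card_insert_disjoint) (use finR in auto)
      then have "card R = card (Some ` ?R0) + 1" using Req by simp
      moreover have "card (Some ` ?R0) = card ?R0" by (rule card_image) simp
      ultimately have cR0: "card ?R0 \<le> 1" using R by simp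
      have AB': "A' \<inter> B' = {}" "A' \<union> B' = verts H - R" "A' \<noteq> {}" "B' \<noteq> {}" using s unfolding sepr_def by auto
      have edH: "\<forall>e\<in>edges H. ends H e \<inter> R = {} \<longrightarrow> ends H e \<subseteq> A' \<or> ends H e \<subseteq> B'"
        using s unfolding sepr_def by auto
      have VR: "verts H - R = Some ` (S - ?R0)" using Req H_verts by auto
      define A where "A = Some -` A'"
      define B where "B = Some -` B'"
      have "A' \<subseteq> range Some" "B' \<subseteq> range Some" using AB'(2) VR by blast+
      then have A'eq: "A' = Some ` A" and B'eq: "B' = Some ` B" unfolding A_def B_def by auto
      have AS: "A \<subseteq> S - ?R0" "B \<subseteq> S - ?R0" using AB'(2) VR A'eq B'eq by (auto simp: inj_image_subset_iff)
      have ABd: "A \<inter> B = {}" using AB'(1) unfolding A_def B_def by auto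
      have Ane: "A \<noteq> {}" "B \<noteq> {}" using AB'(3,4) A'eq B'eq by auto
      have edAB: "ends G e \<subseteq> A \<or> ends G e \<subseteq> B"
        if e: "e \<in> edges G" "ends G e \<subseteq> S" "ends G e \<inter> ?R0 = {}" for e
      proof -
        have "Inl e \<in> edges H" using e H_edges by auto
        moreover have "ends H (Inl e) \<inter> R = {}" using e(3) H_Inl Req by auto
        ultimately have "Some ` ends G e \<subseteq> A' \<or> Some ` ends G e \<subseteq> B'" using edH H_Inl by metis
        then show ?thesis using A'eq B'eq by (auto simp: inj_image_subset_iff)
      qed
      have "card (A \<inter> set ts) + card (B \<inter> set ts) = card ((A \<inter> set ts) \<union> (B \<inter> set ts))"
        using ABd by (intro card_Un_disjoint[symmetric]) auto
      also have "\<dots> \<le> card (set ts)" by (intro card_mono) auto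
      also have "\<dots> = 3" using ts(1,2) distinct_card by metis
      finally have "card (A \<inter> set ts) \<le> 1 \<or> card (B \<inter> set ts) \<le> 1" by linarith
      then show False
      proof
        assume c: "card (A \<inter> set ts) \<le> 1"
        have "\<forall>e\<in>edges G. ends G e \<subseteq> S \<and> ends G e \<inter> ?R0 = {} \<longrightarrow> ends G e \<subseteq> A \<or> ends G e \<inter> A = {}"
          using edAB ABd by blast
        then show False using Q[OF R0S cR0 finR0 AS(1) Ane(1) _ c] by blast
      next
        assume c: "card (B \<inter> set ts) \<le> 1"
        have "\<forall>e\<in>edges G. ends G e \<subseteq> S \<and> ends G e \<inter> ?R0 = {} \<longrightarrow> ends G e \<subseteq> B \<or> ends G e \<inter> B = {}"
          using edAB ABd by blast
        then show False using Q[OF R0S cR0 finR0 AS(2) Ane(2) _ c] by blast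
      qed
    qed
  qed
  ultimately show "connected (del_verts H R)" using conn_iff[OF H_mgraph] by simp
qed

end



context piece begin

lemma critS:
  assumes s: "sepr G {w} {f, g} A B" and wS: "w \<in> S" and fE: "f \<in> edges G" "ends G f \<subseteq> S"
    and gE: "g \<in> edges G"
    and ab: "a \<in> A" "b \<in> B" "ends G f = {a, b}"
    and opt: "X \<subseteq> A \<or> (ends G g \<subseteq> X \<and> card {i. i < 3 \<and> ts ! i \<in> B} \<le> 1)"
  shows "\<not> two_half_connected (del_edges H {Inl f})"
proof -
  have AB: "A \<inter> B = {}" "A \<union> B = verts G - {w}" using s unfolding sepr_def by auto
  have ed: "\<forall>e\<in>edges G - {f, g}. ends G e \<inter> {w} = {} \<longrightarrow> ends G e \<subseteq> A \<or> ends G e \<subseteq> B"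
    using s unfolding sepr_def by auto
  have SV: "S \<subseteq> verts G" using SX(2) by blast
  define A' where "A' = insert None (Some ` (A \<inter> S))"
  define B' where "B' = Some ` (B \<inter> S)"
  have bS: "b \<in> S" using ab fE by blast
  have cl: "(e' = Inl g \<and> ends G g \<subseteq> S) \<or> (\<exists>j<3. e' = Inr j \<and> ts ! j \<in> B \<and> ts ! j \<noteq> w)"
    if e': "e' \<in> edges H - {Inl f}" "Some w \<notin> ends H e'" "\<not> ends H e' \<subseteq> A'" "\<not> ends H e' \<subseteq> B'" for e'
  proof -
    from e'(1) consider (l) e where "e' = Inl e" "e \<in> edges G" "ends G e \<subseteq> S" | (r) j where "e' = Inr j" "j < 3"
      unfolding H_edges by auto
    then show ?thesis
    proof cases
      case l
      have ef: "e \<noteq> f" using l e'(1) by blast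
      have wn: "ends G e \<inter> {w} = {}" using e'(2) l H_Inl by auto
      have nA: "\<not> ends G e \<subseteq> A"
      proof
        assume "ends G e \<subseteq> A"
        then have "ends H e' \<subseteq> A'" using l H_Inl unfolding A'_def by auto
        then show False using e'(3) by simp
      qed
      have nB: "\<not> ends G e \<subseteq> B"
      proof
        assume "ends G e \<subseteq> B"
        then have "ends H e' \<subseteq> B'" using l H_Inl unfolding B'_def by auto
        then show False using e'(4) by simp
      qed
      have "e = g"
      proof (rule ccontr)
        assume "e \<noteq> g"
        then have "e \<in> edges G - {f, g}" using ef l by blast
        then show False using ed wn nA nB by blast
      qed
      then show ?thesis using l by blast
    next
      case r
      have tS: "ts ! j \<in> S" using ts_in[OF r(2)] .
      have tw: "ts ! j \<noteq> w" using e'(2) r H_Inr by auto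
      have "ts ! j \<notin> A"
      proof
        assume "ts ! j \<in> A"
        then have "ends H e' \<subseteq> A'" using r H_Inr tS unfolding A'_def by auto
        then show False using e'(3) by simp
      qed
      moreover have "ts ! j \<in> A \<union> B" using tS tw AB(2) SV by blast
      ultimately show ?thesis using r tw by blast
    qed
  qed
  have ig: "\<exists>x\<in>X. ends G g = {ts ! j, x}" if j: "j < 3" "ts ! j \<in> B" "ts ! j \<noteq> w" and XA: "X \<subseteq> A" for j
  proof -
    have tS: "ts ! j \<in> S" using ts_in[OF j(1)] .
    then obtain e where e: "e \<in> edges G" "ts ! j \<in> ends G e" "ends G e \<inter> X \<noteq> {}"
      using A5 j(1) ts(1) by (metis nth_mem)
    then obtain x where x: "x \<in> ends G e" "x \<in> X" by blast
    have "ts ! j \<noteq> x" using tS x SX(1) by blast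
    then have ee: "ends G e = {ts ! j, x}" using two_elems[OF mgraph_card[OF mg e(1)] e(2) x(1)] by simp
    have xw: "x \<noteq> w" using x(2) wS SX(1) by blast
    have wn: "ends G e \<inter> {w} = {}" using ee xw j(3) by auto
    have "x \<in> A" using XA x by blast
    then have nB: "\<not> ends G e \<subseteq> B" using AB(1) ee by blast
    have nA: "\<not> ends G e \<subseteq> A" using j(2) AB(1) ee by blast
    have "e \<notin> edges G - {f, g}" using ed wn nA nB by blast
    moreover have "e \<noteq> f" using fE(2) ee x(2) SX(1) by blast
    ultimately have "e = g" using e(1) by blast
    then show ?thesis using ee x(2) by blast
  qed
  show ?thesis
  proof (rule build[OF H_mgraph, of "Some w" A' B' "Inr 0"])
    show "Some w \<in> verts H" using wS H_verts by simp
    show "A' \<inter> B' = {}" unfolding A'_def B'_def using AB(1) by auto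
    show "A' \<union> B' = verts H - {Some w}" unfolding A'_def B'_def H_verts using AB(2) SV by auto
    show "A' \<noteq> {}" unfolding A'_def by simp
    show "B' \<noteq> {}" unfolding B'_def using ab(2) bS by blast
    show "Inr 0 \<in> edges H - {Inl f}" unfolding H_edges by simp
  next
    show "\<forall>e\<in>edges H - {Inl f}. \<forall>e'\<in>edges H - {Inl f}. Some w \<notin> ends H e \<and> \<not> ends H e \<subseteq> A' \<and> \<not> ends H e \<subseteq> B' \<and>
        Some w \<notin> ends H e' \<and> \<not> ends H e' \<subseteq> A' \<and> \<not> ends H e' \<subseteq> B' \<longrightarrow> e = e'"
    proof (intro ballI impI)
      fix e1 e2 assume e12: "e1 \<in> edges H - {Inl f}" "e2 \<in> edges H - {Inl f}"
        and c: "Some w \<notin> ends H e1 \<and> \<not> ends H e1 \<subseteq> A' \<and> \<not> ends H e1 \<subseteq> B' \<and>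
        Some w \<notin> ends H e2 \<and> \<not> ends H e2 \<subseteq> A' \<and> \<not> ends H e2 \<subseteq> B'"
      have c1: "(e1 = Inl g \<and> ends G g \<subseteq> S) \<or> (\<exists>j<3. e1 = Inr j \<and> ts ! j \<in> B \<and> ts ! j \<noteq> w)"
        using cl[OF e12(1)] c by blast
      have c2: "(e2 = Inl g \<and> ends G g \<subseteq> S) \<or> (\<exists>j<3. e2 = Inr j \<and> ts ! j \<in> B \<and> ts ! j \<noteq> w)"
        using cl[OF e12(2)] c by blast
      have noboth: False if gS: "ends G g \<subseteq> S" and j: "j < 3" "ts ! j \<in> B" "ts ! j \<noteq> w" for j
      proof (cases "X \<subseteq> A")
        case True
        obtain x where "x \<in> X" "ends G g = {ts ! j, x}" using ig[OF j True] by blast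
        then show False using gS SX(1) by blast
      next
        case False
        then have "ends G g \<subseteq> X" using opt by blast
        then have "ends G g = {}" using gS SX(1) by blast
        then show False using mgraph_card[OF mg gE] by simp
      qed
      have twoj: "j = l" if j: "j < 3" "ts ! j \<in> B" "ts ! j \<noteq> w" and l: "l < 3" "ts ! l \<in> B" "ts ! l \<noteq> w" for j l
      proof (cases "X \<subseteq> A")
        case True
        obtain x where x: "x \<in> X" "ends G g = {ts ! j, x}" using ig[OF j True] by blast
        obtain y where y: "y \<in> X" "ends G g = {ts ! l, y}" using ig[OF l True] by blast
        have "ts ! j \<in> S" using ts_in[OF j(1)] .
        then have "ts ! j \<noteq> y" using y(1) SX(1) by blast
        then have "ts ! j = ts ! l" using x(2) y(2) by (metis doubleton_eq_iff)
        then show ?thesis using ts_inj j(1) l(1) by blast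
      next
        case False
        then have cc: "card {i. i < 3 \<and> ts ! i \<in> B} \<le> 1" using opt by blast
        have "finite {i. i < 3 \<and> ts ! i \<in> B}" by simp
        then show ?thesis using cc j l card_le_Suc0_iff_eq[of "{i. i < 3 \<and> ts ! i \<in> B}"] by simp
      qed
      show "e1 = e2" using c1 c2 noboth twoj by blast
    qed
  qed
qed

lemma less3: "(l::nat) < 3 \<longleftrightarrow> l = 0 \<or> l = 1 \<or> l = 2" by presburger

lemma H_crit_Inr:
  assumes i: "i < 3"
  shows "\<not> two_half_connected (del_edges H {Inr i})"
proof -
  obtain j k where jk: "j < 3" "k < 3" "i \<noteq> j" "i \<noteq> k" "j \<noteq> k" "\<forall>l<3. l = i \<or> l = j \<or> l = k"
  proof -
    have "i = 0 \<or> i = 1 \<or> i = 2" using i by auto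
    then show ?thesis
    proof (elim disjE)
      assume "i = 0" then show ?thesis using that[of 1 2] by (auto simp: less3)
    next
      assume "i = 1" then show ?thesis using that[of 2 0] by (auto simp: less3)
    next
      assume "i = 2" then show ?thesis using that[of 0 1] by (auto simp: less3)
    qed
  qed
  have tjS: "ts ! j \<in> S" using ts_in[OF jk(1)] .
  have "S - {ts ! j} \<noteq> {}" using diff_ne[of "{ts ! j}" S] S3 by simp
  show ?thesis
  proof (rule build[OF H_mgraph, of "Some (ts ! j)" "{None}" "Some ` (S - {ts ! j})" "Inr k"])
    show "Some (ts ! j) \<in> verts H" using tjS H_verts by simp
    show "{None} \<inter> Some ` (S - {ts ! j}) = {}" by auto
    show "{None} \<union> Some ` (S - {ts ! j}) = verts H - {Some (ts ! j)}" unfolding H_verts by auto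
    show "{None} \<noteq> {}" by simp
    show "Some ` (S - {ts ! j}) \<noteq> {}" using \<open>S - {ts ! j} \<noteq> {}\<close> by simp
    show "Inr k \<in> edges H - {Inr i}" unfolding H_edges using jk by auto
  next
    have one: "e = Inr k" if e: "e \<in> edges H - {Inr i}" "Some (ts ! j) \<notin> ends H e"
      "\<not> ends H e \<subseteq> {None}" "\<not> ends H e \<subseteq> Some ` (S - {ts ! j})" for e
    proof -
      from e(1) consider (l) e0 where "e = Inl e0" "e0 \<in> edges G" "ends G e0 \<subseteq> S" | (r) l where "e = Inr l" "l < 3"
        unfolding H_edges by auto
      then show ?thesis
      proof cases
        case l
        then have "ends H e \<subseteq> Some ` (S - {ts ! j})" using e(2) H_Inl by auto
        then show ?thesis using e(4) by simp
      next
        case r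
        have "l \<noteq> i" using r e(1) by blast
        moreover have "l \<noteq> j" using r e(2) H_Inr by auto
        ultimately have "l = k" using jk(6) r(2) by blast
        then show ?thesis using r by simp
      qed
    qed
    show "\<forall>e\<in>edges H - {Inr i}. \<forall>e'\<in>edges H - {Inr i}. Some (ts ! j) \<notin> ends H e \<and> \<not> ends H e \<subseteq> {None} \<and>
        \<not> ends H e \<subseteq> Some ` (S - {ts ! j}) \<and> Some (ts ! j) \<notin> ends H e' \<and> \<not> ends H e' \<subseteq> {None} \<and>
        \<not> ends H e' \<subseteq> Some ` (S - {ts ! j}) \<longrightarrow> e = e'"
      using one by metis
  qed
qed

lemma H_crit_X:
  assumes s: "sepr G {w} {f, g} A B" and wX: "w \<in> X" and fE: "f \<in> edges G" "ends G f \<subseteq> S"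
    and ab: "a \<in> A" "b \<in> B" "ends G f = {a, b}"
  shows "\<not> two_half_connected (del_edges H {Inl f})"
proof -
  have AB: "A \<inter> B = {}" "A \<union> B = verts G - {w}" using s unfolding sepr_def by auto
  have ed: "\<forall>e\<in>edges G - {f, g}. ends G e \<inter> {w} = {} \<longrightarrow> ends G e \<subseteq> A \<or> ends G e \<subseteq> B"
    using s unfolding sepr_def by auto
  have wS: "w \<notin> S" using wX SX(1) by blast
  have SAB: "S \<subseteq> A \<union> B" using AB(2) SX(2) wS by blast
  have abS: "a \<in> S" "b \<in> S" using ab fE by blast+
  show ?thesis
  proof (rule build[OF H_mgraph, of None "Some ` (A \<inter> S)" "Some ` (B \<inter> S)" "Inr 0"])
    show "None \<in> verts H" using H_verts by simp
    show "Some ` (A \<inter> S) \<inter> Some ` (B \<inter> S) = {}" using AB(1) by auto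
    show "Some ` (A \<inter> S) \<union> Some ` (B \<inter> S) = verts H - {None}" unfolding H_verts using SAB by auto
    show "Some ` (A \<inter> S) \<noteq> {}" using ab(1) abS by blast
    show "Some ` (B \<inter> S) \<noteq> {}" using ab(2) abS by blast
    show "Inr 0 \<in> edges H - {Inl f}" unfolding H_edges by simp
  next
    have one: "e' = Inl g" if e': "e' \<in> edges H - {Inl f}" "None \<notin> ends H e'"
      "\<not> ends H e' \<subseteq> Some ` (A \<inter> S)" "\<not> ends H e' \<subseteq> Some ` (B \<inter> S)" for e'
    proof -
      from e'(1) consider (l) e where "e' = Inl e" "e \<in> edges G" "ends G e \<subseteq> S" | (r) j where "e' = Inr j" "j < 3"
        unfolding H_edges by auto
      then show ?thesis
      proof cases
        case r then show ?thesis using e'(2) H_Inr by simp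
      next
        case l
        have ef: "e \<noteq> f" using l e'(1) by blast
        have wn: "ends G e \<inter> {w} = {}" using l(3) wS by blast
        have nA: "\<not> ends G e \<subseteq> A" using e'(3) l H_Inl by auto
        have nB: "\<not> ends G e \<subseteq> B" using e'(4) l H_Inl by auto
        have "e = g"
        proof (rule ccontr)
          assume "e \<noteq> g"
          then have "e \<in> edges G - {f, g}" using ef l by blast
          then show False using ed wn nA nB by blast
        qed
        then show ?thesis using l by simp
      qed
    qed
    show "\<forall>e\<in>edges H - {Inl f}. \<forall>e'\<in>edges H - {Inl f}. None \<notin> ends H e \<and> \<not> ends H e \<subseteq> Some ` (A \<inter> S) \<and>
        \<not> ends H e \<subseteq> Some ` (B \<inter> S) \<and> None \<notin> ends H e' \<and> \<not> ends H e' \<subseteq> Some ` (A \<inter> S) \<and>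
        \<not> ends H e' \<subseteq> Some ` (B \<inter> S) \<longrightarrow> e = e'"
      using one by metis
  qed
qed

lemma H_crit_Inl:
  assumes cr: "\<forall>f\<in>edges G. \<not> two_half_connected (del_edges G {f})"
    and fE: "f \<in> edges G" "ends G f \<subseteq> S"
  shows "\<not> two_half_connected (del_edges H {Inl f})"
proof -
  obtain w g A B where w: "w \<in> verts G" and g: "g \<in> edges G - {f}" and s: "sepr G {w} {f, g} A B"
    using L7[OF mg tc fE(1)] cr fE(1) by blast
  have gE: "g \<in> edges G" using g by blast
  have AB: "A \<inter> B = {}" "A \<union> B = verts G - {w}" using s unfolding sepr_def by auto
  have ed: "\<forall>e\<in>edges G - {f, g}. ends G e \<inter> {w} = {} \<longrightarrow> ends G e \<subseteq> A \<or> ends G e \<subseteq> B"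
    using s unfolding sepr_def by auto
  have cr1: "f \<in> edges G \<and> ends G f \<inter> {w} = {} \<and> \<not> ends G f \<subseteq> A \<and> \<not> ends G f \<subseteq> B"
    using cross_first[OF mg tc s] .
  have "ends G f \<subseteq> A \<union> B" using cr1 AB(2) mgraph_ends[OF mg fE(1)] by blast
  then obtain a b where ab: "a \<in> A" "b \<in> B" "ends G f = {a, b}"
    using cross_ab[OF mg fE(1) _ AB(1)] cr1 by blast
  have s': "sepr G {w} {f, g} B A" using sepr_sym[OF s] .
  have ab': "ends G f = {b, a}" using ab(3) by (simp add: insert_commute)
  show ?thesis
  proof (cases "w \<in> X")
    case True then show ?thesis using H_crit_X[OF s True fE ab] by simp
  next
    case False
    then have wS: "w \<in> S" using w SX(2) by blast
    have XAB: "X \<subseteq> A \<union> B" using AB(2) SX(2) False by blast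
    show ?thesis
    proof (cases "X \<subseteq> A")
      case True then show ?thesis using critS[OF s wS fE gE ab] by blast
    next
      case nA: False
      show ?thesis
      proof (cases "X \<subseteq> B")
        case True then show ?thesis using critS[OF s' wS fE gE ab(2,1) ab'] by blast
      next
        case nB: False
        have gX: "ends G g \<subseteq> X"
        proof -
          define P where "P = X \<inter> A"
          have "P \<subseteq> X" "P \<noteq> {}" "P \<noteq> X" unfolding P_def using nA nB XAB by blast+
          then obtain e where e: "e \<in> edges G" "ends G e \<subseteq> X" "ends G e \<inter> P \<noteq> {}" "ends G e \<inter> (X - P) \<noteq> {}"
            using A6 unfolding conn_set_def by blast
          have wn: "ends G e \<inter> {w} = {}" using e(2) wS SX(1) by blast
          have "X - P \<subseteq> B" unfolding P_def using XAB by blast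
          then have n1: "\<not> ends G e \<subseteq> A" using e(4) AB(1) by blast
          have n2: "\<not> ends G e \<subseteq> B" using e(3) AB(1) unfolding P_def by blast
          have "e \<notin> edges G - {f, g}" using ed wn n1 n2 by blast
          moreover have "e \<noteq> f"
          proof
            assume "e = f"
            then have "ends G e = {}" using e(2) fE(2) SX(1) by blast
            then show False using mgraph_card[OF mg e(1)] by simp
          qed
          ultimately have "e = g" using e(1) by blast
          then show ?thesis using e(2) by simp
        qed
        have "card {i. i < 3 \<and> ts ! i \<in> A} + card {i. i < 3 \<and> ts ! i \<in> B}
            = card ({i. i < 3 \<and> ts ! i \<in> A} \<union> {i. i < 3 \<and> ts ! i \<in> B})"
          using AB(1) by (intro card_Un_disjoint[symmetric]) auto
        also have "\<dots> \<le> card {i. i < (3::nat)}" by (intro card_mono) auto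
        also have "\<dots> = 3" by simp
        finally have "card {i. i < 3 \<and> ts ! i \<in> B} \<le> 1 \<or> card {i. i < 3 \<and> ts ! i \<in> A} \<le> 1" by linarith
        then show ?thesis
        proof
          assume "card {i. i < 3 \<and> ts ! i \<in> B} \<le> 1"
          then show ?thesis using critS[OF s wS fE gE ab] gX by blast
        next
          assume "card {i. i < 3 \<and> ts ! i \<in> A} \<le> 1"
          then show ?thesis using critS[OF s' wS fE gE ab(2,1) ab'] gX by blast
        qed
      qed
    qed
  qed
qed

lemma H_good:
  assumes cr: "\<forall>f\<in>edges G. \<not> two_half_connected (del_edges G {f})"
  shows "good_piece H G"
  unfolding good_piece_def critical_two_half_connected_def
proof (intro conjI ballI)
  show "two_half_connected H" using tc_thc[OF H_mgraph H_tc] .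
  show "three_connected H" using H_tc .
next
  fix f1 assume "f1 \<in> edges H"
  then consider (l) e where "f1 = Inl e" "e \<in> edges G" "ends G e \<subseteq> S" | (r) j where "f1 = Inr j" "j < 3"
    unfolding H_edges by auto
  then show "\<not> two_half_connected (del_edges H {f1})"
  proof cases
    case l then show ?thesis using H_crit_Inl[OF cr] by simp
  next
    case r then show ?thesis using H_crit_Inr by simp
  qed
next
  have "card (verts G) = card S + card X" using SX finS finX by (metis card_Un_disjoint)
  then show "card (verts H) < card (verts G)" using card_H X2 by simp
qed

end



lemma sepr_E:
  assumes "sepr G W F A B"
  shows "A \<inter> B = {}" "A \<union> B = verts G - W" "A \<noteq> {}" "B \<noteq> {}"
    "\<And>e. e \<in> edges G - F \<Longrightarrow> ends G e \<inter> W = {} \<Longrightarrow> ends G e \<subseteq> A \<or> ends G e \<subseteq> B"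
  using assms unfolding sepr_def by auto

lemma A_dup:
  assumes mg: "mgraph G" and tc: "three_connected G" and s: "sepr G {} {p, q, r} C1 C2"
    and d: "p \<noteq> q" "p \<noteq> r" "q \<noteq> r" and E: "p \<in> edges G" "q \<in> edges G" "r \<in> edges G"
    and en: "ends G p = {up, vp}" "ends G q = {uq, vq}" "ends G r = {ur, vr}"
    and u: "up \<in> C1" "uq \<in> C1" "ur \<in> C1" and v: "vp \<in> C2" "vq \<in> C2" "vr \<in> C2"
    and eq: "up = uq" and one: "C1 = {up} \<Longrightarrow> False"
  shows False
proof -
  note S = sepr_E[OF s]
  define R where "R = {up, ur}"
  have RC: "R \<subseteq> C1" unfolding R_def using u by simp
  have cR: "card R \<le> 2" unfolding R_def by (simp add: card_insert_if)
  have C1R: "C1 \<subseteq> R"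
  proof (rule ccontr)
    assume "\<not> C1 \<subseteq> R"
    then have ne: "C1 - R \<noteq> {}" by blast
    have "sepr G R {} (C1 - R) C2"
      unfolding sepr_def
    proof (intro conjI ballI impI)
      show "(C1 - R) \<inter> C2 = {}" using S(1) by blast
      show "C1 - R \<union> C2 = verts G - R" using S(1,2) RC by blast
      show "C1 - R \<noteq> {}" by (rule ne)
      show "C2 \<noteq> {}" by (rule S(4))
    next
      fix e assume e: "e \<in> edges G - {}" "ends G e \<inter> R = {}"
      have "e \<noteq> p" "e \<noteq> q" "e \<noteq> r" using e(2) en eq unfolding R_def by auto
      then have "ends G e \<subseteq> C1 \<or> ends G e \<subseteq> C2" using S(5)[of e] e(1) by blast
      then show "ends G e \<subseteq> C1 - R \<or> ends G e \<subseteq> C2" using e(2) by blast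
    qed
    then show False using L2[OF mg tc _ cR] unfolding R_def by simp
  qed
  show False
  proof (cases "up = ur")
    case True
    then have "C1 = {up}" using C1R u unfolding R_def by auto
    then show False using one by simp
  next
    case False
    have C1eq: "C1 = {up, ur}" using C1R RC unfolding R_def by simp
    have "ur \<notin> C2" "up \<notin> C2" using u S(1) by blast+
    have "\<forall>e\<in>edges G. ur \<in> ends G e \<longrightarrow> ends G e \<subseteq> insert ur {up, vr}"
    proof (intro ballI impI)
      fix e assume e: "e \<in> edges G" "ur \<in> ends G e"
      show "ends G e \<subseteq> insert ur {up, vr}"
      proof (cases "e = p \<or> e = q \<or> e = r")
        case True
        have "ur \<noteq> vp" "ur \<noteq> vq" using \<open>ur \<notin> C2\<close> v by blast+
        then have "e = r" using True e(2) en eq False by auto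
        then show ?thesis using en by auto
      next
        case nt: False
        then have "ends G e \<subseteq> C1 \<or> ends G e \<subseteq> C2" using S(5)[of e] e(1) by blast
        then have "ends G e \<subseteq> C1" using e(2) \<open>ur \<notin> C2\<close> by blast
        then show ?thesis using C1eq by blast
      qed
    qed
    moreover have "ur \<in> verts G" using u S(2) by blast
    moreover have "ur \<notin> {up, vr}" using False v(3) u(3) S(1) by blast
    moreover have "card {up, vr} \<le> 2" by (simp add: card_insert_if)
    ultimately show False using L3[OF mg tc, of ur "{up, vr}"] by simp
  qed
qed

lemma A_single:
  assumes mg: "mgraph G" and s: "sepr G {} {e0, e1, e2} C1 C2"
    and d: "e0 \<noteq> e1" "e0 \<noteq> e2" "e1 \<noteq> e2" and E: "e0 \<in> edges G" "e1 \<in> edges G" "e2 \<in> edges G"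
    and en: "ends G e0 = {u0, v0}" "ends G e1 = {u1, v1}" "ends G e2 = {u2, v2}"
    and u: "u0 \<in> C1" "u1 \<in> C1" "u2 \<in> C1" and v: "v0 \<in> C2" "v1 \<in> C2" "v2 \<in> C2"
    and c: "c \<in> ends G e0" "c \<notin> ends G e1" "c \<notin> ends G e2"
    and nd: "\<not> degenerate G c e1 e2"
    and C1: "C1 = {a}"
  shows False
proof -
  note S = sepr_E[OF s]
  have ua: "u0 = a" "u1 = a" "u2 = a" using u C1 by auto
  have "c \<noteq> a" using c(2) en(2) ua(2) by auto
  then have cv: "c = v0" using c(1) en(1) ua(1) by auto
  have "{e \<in> edges G. a \<in> ends G e} = {e0, e1, e2}"
  proof
    show "{e0, e1, e2} \<subseteq> {e \<in> edges G. a \<in> ends G e}" using E en ua by auto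
    show "{e \<in> edges G. a \<in> ends G e} \<subseteq> {e0, e1, e2}"
    proof
      fix e assume e: "e \<in> {e \<in> edges G. a \<in> ends G e}"
      show "e \<in> {e0, e1, e2}"
      proof (rule ccontr)
        assume "e \<notin> {e0, e1, e2}"
        then have "ends G e \<subseteq> C1 \<or> ends G e \<subseteq> C2" using S(5)[of e] e by blast
        moreover have "a \<notin> C2" using C1 S(1) by blast
        ultimately have "ends G e \<subseteq> {a}" using e C1 by blast
        then have "card (ends G e) \<le> card {a}" by (intro card_mono) auto
        then show False using mgraph_card[OF mg] e by simp
      qed
    qed
  qed
  moreover have "card {e0, e1, e2} = 3" using d by simp
  moreover have "ends G e0 = {a, c}" using en(1) ua(1) cv by simp
  moreover have "a \<in> verts G" using C1 S(2) by blast
  ultimately have "degenerate G c e1 e2" unfolding degenerate_def using E(1) by blast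
  then show False using nd by simp
qed

lemma A_dist:
  assumes mg: "mgraph G" and tc: "three_connected G" and s: "sepr G {} {e0, e1, e2} C1 C2"
    and d: "e0 \<noteq> e1" "e0 \<noteq> e2" "e1 \<noteq> e2" and E: "e0 \<in> edges G" "e1 \<in> edges G" "e2 \<in> edges G"
    and en: "ends G e0 = {u0, v0}" "ends G e1 = {u1, v1}" "ends G e2 = {u2, v2}"
    and u: "u0 \<in> C1" "u1 \<in> C1" "u2 \<in> C1" and v: "v0 \<in> C2" "v1 \<in> C2" "v2 \<in> C2"
    and c: "c \<in> ends G e0" "c \<notin> ends G e1" "c \<notin> ends G e2"
    and nd: "\<not> degenerate G c e1 e2"
  shows "distinct [u0, u1, u2]" "card C1 \<ge> 3"
proof -
  have one: "C1 = {a} \<Longrightarrow> False" for a using A_single[OF mg s d E en u v c nd] by blast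
  have s2: "sepr G {} {e0, e2, e1} C1 C2" using s by (simp add: insert_commute)
  have s3: "sepr G {} {e1, e2, e0} C1 C2" using s by (simp add: insert_commute)
  have "u0 \<noteq> u1" using A_dup[OF mg tc s d E en u v] one by blast
  moreover have "u0 \<noteq> u2" using A_dup[OF mg tc s2 d(2,1) _ E(1,3,2) en(1,3,2) u(1,3,2) v(1,3,2)] one d(3) by blast
  moreover have "u1 \<noteq> u2" using A_dup[OF mg tc s3 d(3) d(1,2)[symmetric] E(2,3,1) en(2,3,1) u(2,3,1) v(2,3,1)] one by blast
  ultimately show dd: "distinct [u0, u1, u2]" by simp
  have "C1 \<subseteq> verts G" using sepr_E(2)[OF s] by blast
  then have fin: "finite C1" using mg unfolding mgraph_def by (metis finite_subset)
  have "card {u0, u1, u2} = 3" using dd by simp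
  moreover have "card {u0, u1, u2} \<le> card C1" using fin u by (intro card_mono) auto
  ultimately show "card C1 \<ge> 3" by simp
qed

lemma A_piece:
  assumes mg: "mgraph G" and tc: "three_connected G"
    and cr: "\<forall>f\<in>edges G. \<not> two_half_connected (del_edges G {f})"
    and s: "sepr G {} {e0, e1, e2} C1 C2"
    and d: "e0 \<noteq> e1" "e0 \<noteq> e2" "e1 \<noteq> e2" and E: "e0 \<in> edges G" "e1 \<in> edges G" "e2 \<in> edges G"
    and en: "ends G e0 = {u0, v0}" "ends G e1 = {u1, v1}" "ends G e2 = {u2, v2}"
    and u: "u0 \<in> C1" "u1 \<in> C1" "u2 \<in> C1" and v: "v0 \<in> C2" "v1 \<in> C2" "v2 \<in> C2"
    and c: "c \<in> ends G e0" "c \<notin> ends G e1" "c \<notin> ends G e2"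
    and nd: "\<not> degenerate G c e1 e2"
    and cs: "conn_set G C2" and c2: "card C2 \<ge> 3"
  shows "good_piece (glue G C1 [ends G e0 \<inter> C1, ends G e1 \<inter> C1, ends G e2 \<inter> C1]) G"
proof -
  note S = sepr_E[OF s]
  have dd: "distinct [u0, u1, u2]" and c1: "card C1 \<ge> 3" using A_dist[OF mg tc s d E en u v c nd] by auto
  have vC1: "v0 \<notin> C1" "v1 \<notin> C1" "v2 \<notin> C1" using v S(1) by blast+
  have "ends G e0 \<inter> C1 = {u0}" "ends G e1 \<inter> C1 = {u1}" "ends G e2 \<inter> C1 = {u2}"
    using en u vC1 by auto
  then have lst: "[ends G e0 \<inter> C1, ends G e1 \<inter> C1, ends G e2 \<inter> C1] = map (\<lambda>x. {x}) [u0, u1, u2]" by simp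
  have cross: "e = e0 \<or> e = e1 \<or> e = e2" if "e \<in> edges G" "ends G e \<inter> C1 \<noteq> {}" "ends G e \<inter> C2 \<noteq> {}" for e
  proof (rule ccontr)
    assume "\<not> ?thesis"
    then have "ends G e \<subseteq> C1 \<or> ends G e \<subseteq> C2" using S(5)[of e] that(1) by blast
    then show False using that(2,3) S(1) by blast
  qed
  have "piece G C1 C2 [u0, u1, u2]"
  proof
    show "mgraph G" "three_connected G" by (rule mg, rule tc)
    show "C1 \<inter> C2 = {}" "C1 \<union> C2 = verts G" using S(1,2) by auto
    show "2 \<le> card C2" using c2 by simp
    show "3 \<le> card C1" using c1 .
    show "length [u0, u1, u2] = 3" by simp
    show "distinct [u0, u1, u2]" by (rule dd)
    show "set [u0, u1, u2] \<subseteq> C1" using u by simp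
    show "\<forall>e\<in>edges G. ends G e \<inter> C1 \<noteq> {} \<and> ends G e \<inter> C2 \<noteq> {} \<longrightarrow> (\<exists>t\<in>set [u0, u1, u2]. t \<in> ends G e)"
      using cross en by auto
    show "\<forall>t\<in>set [u0, u1, u2]. \<exists>e\<in>edges G. t \<in> ends G e \<and> ends G e \<inter> C2 \<noteq> {}"
      using E en v by auto
    show "conn_set G C2" by (rule cs)
    show "\<forall>t\<in>set [u0, u1, u2]. \<forall>z. z \<noteq> t \<longrightarrow> (\<exists>e\<in>edges G. t \<in> ends G e \<and> ends G e \<subseteq> C1 \<and> z \<notin> ends G e)"
    proof (intro ballI allI impI)
      fix t z assume t: "t \<in> set [u0, u1, u2]" and zt: "z \<noteq> t"
      obtain et vt where tt: "et \<in> edges G" "ends G et = {t, vt}" "vt \<in> C2" "t \<in> C1"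
        "\<forall>e\<in>edges G. t \<in> ends G e \<and> ends G e \<inter> C2 \<noteq> {} \<longrightarrow> e = et"
      proof -
        have uniq: "\<forall>e\<in>edges G. ui \<in> ends G e \<and> ends G e \<inter> C2 \<noteq> {} \<longrightarrow> e = ei"
          if "ei \<in> {e0, e1, e2}" "ends G ei = {ui, vi}" "ui \<in> C1"
             "\<forall>e\<in>{e0, e1, e2}. e \<noteq> ei \<longrightarrow> ui \<notin> ends G e" for ei ui vi
        proof (intro ballI impI)
          fix e assume e: "e \<in> edges G" "ui \<in> ends G e \<and> ends G e \<inter> C2 \<noteq> {}"
          have "ends G e \<inter> C1 \<noteq> {}" using e that(3) by blast
          then have "e \<in> {e0, e1, e2}" using cross e by blast
          then show "e = ei" using that(4) e by blast
        qed
        have "u0 \<notin> ends G e1" "u0 \<notin> ends G e2" "u1 \<notin> ends G e0" "u1 \<notin> ends G e2"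
          "u2 \<notin> ends G e0" "u2 \<notin> ends G e1"
          using dd en u vC1 by auto
        note nots = this
        have tc3: "t = u0 \<or> t = u1 \<or> t = u2" using t by simp
        then show ?thesis
        proof (elim disjE)
          assume tu: "t = u0"
          have "\<forall>e\<in>{e0, e1, e2}. e \<noteq> e0 \<longrightarrow> u0 \<notin> ends G e" using nots by blast
          then have "\<forall>e\<in>edges G. u0 \<in> ends G e \<and> ends G e \<inter> C2 \<noteq> {} \<longrightarrow> e = e0"
            using uniq[of e0 u0 v0] en(1) u(1) by blast
          then show ?thesis using that[of e0 v0] E(1) en(1) v(1) u(1) tu by blast
        next
          assume tu: "t = u1"
          have "\<forall>e\<in>{e0, e1, e2}. e \<noteq> e1 \<longrightarrow> u1 \<notin> ends G e" using nots by blast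
          then have "\<forall>e\<in>edges G. u1 \<in> ends G e \<and> ends G e \<inter> C2 \<noteq> {} \<longrightarrow> e = e1"
            using uniq[of e1 u1 v1] en(2) u(2) by blast
          then show ?thesis using that[of e1 v1] E(2) en(2) v(2) u(2) tu by blast
        next
          assume tu: "t = u2"
          have "\<forall>e\<in>{e0, e1, e2}. e \<noteq> e2 \<longrightarrow> u2 \<notin> ends G e" using nots by blast
          then have "\<forall>e\<in>edges G. u2 \<in> ends G e \<and> ends G e \<inter> C2 \<noteq> {} \<longrightarrow> e = e2"
            using uniq[of e2 u2 v2] en(3) u(3) by blast
          then show ?thesis using that[of e2 v2] E(3) en(3) v(3) u(3) tu by blast
        qed
      qed
      show "\<exists>e\<in>edges G. t \<in> ends G e \<and> ends G e \<subseteq> C1 \<and> z \<notin> ends G e"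
      proof (rule ccontr)
        assume nn: "\<not> ?thesis"
        have "\<forall>e\<in>edges G. t \<in> ends G e \<longrightarrow> ends G e \<subseteq> insert t {z, vt}"
        proof (intro ballI impI)
          fix e assume e: "e \<in> edges G" "t \<in> ends G e"
          show "ends G e \<subseteq> insert t {z, vt}"
          proof (cases "ends G e \<subseteq> C1")
            case True
            then have "z \<in> ends G e" using nn e by blast
            then have "ends G e = {t, z}" using two_elems[OF mgraph_card[OF mg e(1)] e(2)] zt by metis
            then show ?thesis by blast
          next
            case False
            have "ends G e \<subseteq> C1 \<union> C2" using mgraph_ends[OF mg e(1)] S(2) by simp
            then have "ends G e \<inter> C2 \<noteq> {}" using False by blast
            then have "e = et" using tt(5) e by blast
            then show ?thesis using tt(2) by blast
          qed
        qed
        moreover have "t \<in> verts G" using tt(4) S(2) by blast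
        moreover have "t \<notin> {z, vt}" using zt tt(3,4) S(1) by blast
        moreover have "card {z, vt} \<le> 2" by (simp add: card_insert_if)
        ultimately show False using L3[OF mg tc, of t "{z, vt}"] by simp
      qed
    qed
  qed
  then interpret P: piece G C1 C2 "[u0, u1, u2]" .
  have "good_piece P.H G" using P.H_good[OF cr] .
  then show ?thesis unfolding P.H_def lst .
qed



lemma B_dist:
  assumes mg: "mgraph G" and tc: "three_connected G"
    and cr: "\<forall>f\<in>edges G. \<not> two_half_connected (del_edges G {f})"
    and s: "sepr G {c} {e1, e2} C1 C2" and cV: "c \<in> verts G"
    and d: "e1 \<noteq> e2" and E: "e1 \<in> edges G" "e2 \<in> edges G"
    and en: "ends G e1 = {u1, v1}" "ends G e2 = {u2, v2}"
    and u: "u1 \<in> C1" "u2 \<in> C1" and v: "v1 \<in> C2" "v2 \<in> C2"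
    and cn: "c \<notin> ends G e1" "c \<notin> ends G e2"
    and nd: "\<not> degenerate G c e1 e2"
  shows "u1 \<noteq> u2"
proof
  assume eq: "u1 = u2"
  note S = sepr_E[OF s]
  have uc: "u1 \<noteq> c" using u S(2) by blast
  have C1u: "C1 \<subseteq> {u1}"
  proof (rule ccontr)
    assume "\<not> C1 \<subseteq> {u1}"
    then have ne: "C1 - {u1} \<noteq> {}" by blast
    have "sepr G {u1, c} {} (C1 - {u1}) C2"
      unfolding sepr_def
    proof (intro conjI ballI impI)
      show "(C1 - {u1}) \<inter> C2 = {}" using S(1) by blast
      show "C1 - {u1} \<union> C2 = verts G - {u1, c}" using S(1,2) u by blast
      show "C1 - {u1} \<noteq> {}" by (rule ne)
      show "C2 \<noteq> {}" by (rule S(4))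
    next
      fix e assume e: "e \<in> edges G - {}" "ends G e \<inter> {u1, c} = {}"
      have "e \<noteq> e1" "e \<noteq> e2" using e(2) en eq by auto
      moreover have "ends G e \<inter> {c} = {}" using e(2) by blast
      ultimately have "ends G e \<subseteq> C1 \<or> ends G e \<subseteq> C2" using S(5)[of e] e(1) by blast
      then show "ends G e \<subseteq> C1 - {u1} \<or> ends G e \<subseteq> C2" using e(2) by blast
    qed
    moreover have "card {u1, c} \<le> 2" by (simp add: card_insert_if)
    ultimately show False using L2[OF mg tc, of "{u1, c}"] by simp
  qed
  then have C1eq: "C1 = {u1}" using u by blast
  have u1C2: "u1 \<notin> C2" using u S(1) by blast
  have other: "ends G e = {u1, c}" if e: "e \<in> edges G" "u1 \<in> ends G e" "e \<noteq> e1" "e \<noteq> e2" for e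
  proof (cases "c \<in> ends G e")
    case True
    show ?thesis by (rule two_elems[OF mgraph_card[OF mg e(1)] e(2) True uc])
  next
    case False
    then have "ends G e \<subseteq> C1 \<or> ends G e \<subseteq> C2" using S(5)[of e] e by blast
    then have "ends G e \<subseteq> {u1}" using C1eq u1C2 e(2) by blast
    then have "card (ends G e) \<le> card {u1}" by (intro card_mono) auto
    then show ?thesis using mgraph_card[OF mg e(1)] by simp
  qed
  obtain e0 where e0: "e0 \<in> edges G" "ends G e0 = {u1, c}"
  proof (rule ccontr)
    assume nn: "\<not> thesis"
    have "\<forall>e\<in>edges G. u1 \<in> ends G e \<longrightarrow> ends G e \<subseteq> insert u1 {v1, v2}"
    proof (intro ballI impI)
      fix e assume e: "e \<in> edges G" "u1 \<in> ends G e"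
      show "ends G e \<subseteq> insert u1 {v1, v2}"
      proof (cases "e = e1 \<or> e = e2")
        case True then show ?thesis using en eq by auto
      next
        case False
        then have "ends G e = {u1, c}" using other e by blast
        then show ?thesis using nn that e(1) by blast
      qed
    qed
    moreover have "u1 \<in> verts G" using u S(2) by blast
    moreover have "u1 \<notin> {v1, v2}" using u1C2 v by blast
    moreover have "card {v1, v2} \<le> 2" by (simp add: card_insert_if)
    ultimately show False using L3[OF mg tc, of u1 "{v1, v2}"] by simp
  qed
  have "{e \<in> edges G. u1 \<in> ends G e} = {e0, e1, e2}"
  proof
    show "{e0, e1, e2} \<subseteq> {e \<in> edges G. u1 \<in> ends G e}" using e0 E en eq by auto
    show "{e \<in> edges G. u1 \<in> ends G e} \<subseteq> {e0, e1, e2}"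
    proof
      fix e assume e: "e \<in> {e \<in> edges G. u1 \<in> ends G e}"
      show "e \<in> {e0, e1, e2}"
      proof (rule ccontr)
        assume ne: "e \<notin> {e0, e1, e2}"
        then have "ends G e = {u1, c}" using other e by blast
        then have "ends G e = ends G e0" using e0 by simp
        then show False using L6[OF mg tc cr _ e0(1)] e ne by blast
      qed
    qed
  qed
  moreover have "card {e0, e1, e2} = 3"
  proof -
    have "e0 \<noteq> e1" "e0 \<noteq> e2" using e0(2) cn by auto
    then show ?thesis using d by simp
  qed
  moreover have "u1 \<in> verts G" using u S(2) by blast
  ultimately have "degenerate G c e1 e2" unfolding degenerate_def using e0 by blast
  then show False using nd by simp
qed

lemma edge_at_c:
  assumes mg: "mgraph G" "e \<in> edges G" "c \<in> ends G e" "ends G e \<subseteq> S \<union> X" "\<not> ends G e \<subseteq> S" "c \<in> S"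
  shows "\<exists>y\<in>X. ends G e = {c, y}"
proof -
  obtain y where y: "y \<in> ends G e" "y \<notin> S" using assms(5) by blast
  then have "y \<in> X" "y \<noteq> c" using assms(4,6) by blast+
  then show ?thesis using two_elems[OF mgraph_card[OF assms(1,2)] assms(3) y(1)] by blast
qed

lemma B_piece:
  assumes mg: "mgraph G" and tc: "three_connected G"
    and cr: "\<forall>f\<in>edges G. \<not> two_half_connected (del_edges G {f})"
    and s: "sepr G {c} {e1, e2} C1 C2" and cV: "c \<in> verts G"
    and d: "e1 \<noteq> e2" and E: "e1 \<in> edges G" "e2 \<in> edges G"
    and en: "ends G e1 = {u1, v1}" "ends G e2 = {u2, v2}"
    and u: "u1 \<in> C1" "u2 \<in> C1" and v: "v1 \<in> C2" "v2 \<in> C2"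
    and cn: "c \<notin> ends G e1" "c \<notin> ends G e2"
    and nd: "\<not> degenerate G c e1 e2"
    and nob: "\<not> (\<exists>e0\<in>edges G. c \<in> ends G e0 \<and> \<not> connected (del_edges G {e0, e1, e2}))"
    and cs: "conn_set G C2" and c2: "card C2 \<ge> 2"
  shows "good_piece (glue G (insert c C1) [ends G e1 \<inter> C1, ends G e2 \<inter> C1, {c}]) G"
proof -
  note S = sepr_E[OF s]
  have u12: "u1 \<noteq> u2" using B_dist[OF mg tc cr s cV d E en u v cn nd] .
  have cC: "c \<notin> C1" "c \<notin> C2" using S(2) by blast+
  have vC1: "v1 \<notin> C1" "v2 \<notin> C1" using v S(1) by blast+
  have uC2: "u1 \<notin> C2" "u2 \<notin> C2" using u S(1) by blast+
  have "ends G e1 \<inter> C1 = {u1}" "ends G e2 \<inter> C1 = {u2}" using en u vC1 by auto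
  then have lst: "[ends G e1 \<inter> C1, ends G e2 \<inter> C1, {c}] = map (\<lambda>x. {x}) [u1, u2, c]" by simp
  have VSX: "insert c C1 \<union> C2 = verts G" using S(2) cV by blast
  have finC1: "finite C1" using mg S(2) unfolding mgraph_def by (metis finite_Diff finite_Un)
  have "card {u1, u2} \<le> card C1" using finC1 u by (intro card_mono) auto
  then have c1: "card C1 \<ge> 2" using u12 by simp
  have c3: "card (insert c C1) \<ge> 3" using c1 cC(1) finC1 by simp
  have cross: "e = e1 \<or> e = e2" if "e \<in> edges G" "c \<notin> ends G e" "ends G e \<inter> C1 \<noteq> {}" "ends G e \<inter> C2 \<noteq> {}" for e
  proof (rule ccontr)
    assume "\<not> ?thesis"
    then have "ends G e \<subseteq> C1 \<or> ends G e \<subseteq> C2" using S(5)[of e] that(1,2) by blast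
    then show False using that(3,4) S(1) by blast
  qed
  have eVS: "ends G e \<subseteq> insert c C1 \<union> C2" if "e \<in> edges G" for e using mgraph_ends[OF mg that] VSX by simp
  have "piece G (insert c C1) C2 [u1, u2, c]"
  proof
    show "mgraph G" "three_connected G" by (rule mg, rule tc)
    show "insert c C1 \<inter> C2 = {}" using S(1) cC by blast
    show "insert c C1 \<union> C2 = verts G" by (rule VSX)
    show "2 \<le> card C2" using c2 by simp
    show "3 \<le> card (insert c C1)" using c3 .
    show "length [u1, u2, c] = 3" by simp
    show "distinct [u1, u2, c]" using u12 u cC by auto
    show "set [u1, u2, c] \<subseteq> insert c C1" using u by simp
    show "\<forall>e\<in>edges G. ends G e \<inter> insert c C1 \<noteq> {} \<and> ends G e \<inter> C2 \<noteq> {} \<longrightarrow> (\<exists>t\<in>set [u1, u2, c]. t \<in> ends G e)"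
    proof (intro ballI impI)
      fix e assume e: "e \<in> edges G" "ends G e \<inter> insert c C1 \<noteq> {} \<and> ends G e \<inter> C2 \<noteq> {}"
      show "\<exists>t\<in>set [u1, u2, c]. t \<in> ends G e"
      proof (cases "c \<in> ends G e")
        case True then show ?thesis by simp
      next
        case False
        then have "ends G e \<inter> C1 \<noteq> {}" using e(2) by blast
        then have "e = e1 \<or> e = e2" using cross e False by blast
        then show ?thesis using en by auto
      qed
    qed
    show "\<forall>t\<in>set [u1, u2, c]. \<exists>e\<in>edges G. t \<in> ends G e \<and> ends G e \<inter> C2 \<noteq> {}"
    proof -
      have "\<exists>e\<in>edges G. c \<in> ends G e \<and> ends G e \<inter> C2 \<noteq> {}"
      proof (rule ccontr)
        assume nn: "\<not> ?thesis"
        have "sepr G {} {e1, e2} (insert c C1) C2"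
          unfolding sepr_def
        proof (intro conjI ballI impI)
          show "insert c C1 \<inter> C2 = {}" using S(1) cC by blast
          show "insert c C1 \<union> C2 = verts G - {}" using VSX by simp
          show "insert c C1 \<noteq> {}" "C2 \<noteq> {}" using S(4) by auto
        next
          fix e assume e: "e \<in> edges G - {e1, e2}" "ends G e \<inter> {} = {}"
          show "ends G e \<subseteq> insert c C1 \<or> ends G e \<subseteq> C2"
          proof (cases "c \<in> ends G e")
            case True
            then have "ends G e \<inter> C2 = {}" using nn e(1) by blast
            then show ?thesis using eVS[of e] e(1) by blast
          next
            case False
            then have "ends G e \<subseteq> C1 \<or> ends G e \<subseteq> C2" using S(5)[of e] e(1) by blast
            then show ?thesis by blast
          qed
        qed
        then show False using L5[OF mg tc] by blast
      qed
      then show ?thesis using E en v by auto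
    qed
    show "conn_set G C2" by (rule cs)
    show "\<forall>t\<in>set [u1, u2, c]. \<forall>z. z \<noteq> t \<longrightarrow> (\<exists>e\<in>edges G. t \<in> ends G e \<and> ends G e \<subseteq> insert c C1 \<and> z \<notin> ends G e)"
    proof (intro ballI allI impI)
      fix t z assume t: "t \<in> set [u1, u2, c]" and zt: "z \<noteq> t"
      have ucase: "\<exists>e\<in>edges G. ui \<in> ends G e \<and> ends G e \<subseteq> insert c C1 \<and> z \<notin> ends G e"
        if ei: "ei \<in> edges G" "ends G ei = {ui, vi}" "ui \<in> C1" "vi \<in> C2" "z \<noteq> ui"
          and eo: "ends G eo = {uo, vo}" "uo \<noteq> ui" "vo \<in> C2" and eio: "{ei, eo} = {e1, e2}" for ei ui vi eo uo vo
      proof (rule ccontr)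
        assume nn: "\<not> ?thesis"
        have uiC2: "ui \<notin> C2" using ei(3) S(1) by blast
        have uic: "ui \<noteq> c" using ei(3) cC by blast
        have "\<forall>e\<in>edges G. ui \<in> ends G e \<longrightarrow> ends G e \<subseteq> insert ui {z, vi}"
        proof (intro ballI impI)
          fix e assume e: "e \<in> edges G" "ui \<in> ends G e"
          show "ends G e \<subseteq> insert ui {z, vi}"
          proof (cases "ends G e \<subseteq> insert c C1")
            case True
            then have "z \<in> ends G e" using nn e by blast
            then have "ends G e = {ui, z}" using two_elems[OF mgraph_card[OF mg e(1)] e(2)] ei(5) by metis
            then show ?thesis by blast
          next
            case False
            have cn': "c \<notin> ends G e"
            proof
              assume ce: "c \<in> ends G e"
              then have "ends G e = {ui, c}" using two_elems[OF mgraph_card[OF mg e(1)] e(2) ce uic] by simp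
              then show False using False ei(3) by simp
            qed
            have "ends G e \<inter> C2 \<noteq> {}" using False eVS[OF e(1)] by blast
            moreover have "ends G e \<inter> C1 \<noteq> {}" using e(2) ei(3) by blast
            ultimately have "e = e1 \<or> e = e2" using cross e(1) cn' by blast
            then have "e = ei \<or> e = eo" using eio by blast
            moreover have "e \<noteq> eo"
            proof
              assume "e = eo"
              then have "ui = uo \<or> ui = vo" using e(2) eo(1) by simp
              then show False using eo(2,3) uiC2 by blast
            qed
            ultimately have "e = ei" by blast
            then show ?thesis using ei(2) by blast
          qed
        qed
        moreover have "ui \<in> verts G" using ei(3) S(2) by blast
        moreover have "ui \<notin> {z, vi}" using ei(4,5) uiC2 by blast
        moreover have "card {z, vi} \<le> 2" by (simp add: card_insert_if)
        ultimately show False using L3[OF mg tc, of ui "{z, vi}"] by simp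
      qed
      have ccase: "\<exists>e\<in>edges G. c \<in> ends G e \<and> ends G e \<subseteq> insert c C1 \<and> z \<notin> ends G e" if zc: "z \<noteq> c"
      proof (rule ccontr)
        assume nn: "\<not> ?thesis"
        have atc: "(ends G e = {c, z} \<and> z \<in> C1) \<or> (\<exists>y\<in>C2. ends G e = {c, y})" if e: "e \<in> edges G" "c \<in> ends G e" for e
        proof (cases "ends G e \<subseteq> insert c C1")
          case True
          then have "z \<in> ends G e" using nn e by blast
          then have "ends G e = {c, z}" using two_elems[OF mgraph_card[OF mg e(1)] e(2)] zc by metis
          moreover then have "z \<in> C1" using True zc by blast
          ultimately show ?thesis by blast
        next
          case False
          then show ?thesis using edge_at_c[OF mg e(1,2) eVS[OF e(1)] False insertI1] by blast
        qed
        show False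
        proof (cases "z \<in> C1 \<and> (\<exists>e0\<in>edges G. ends G e0 = {c, z})")
          case True
          then obtain e0 where e0: "e0 \<in> edges G" "ends G e0 = {c, z}" by blast
          have "sepr G {} {e0, e1, e2} C1 (insert c C2)"
            unfolding sepr_def
          proof (intro conjI ballI impI)
            show "C1 \<inter> insert c C2 = {}" using S(1) cC by blast
            show "C1 \<union> insert c C2 = verts G - {}" using VSX by blast
            show "C1 \<noteq> {}" "insert c C2 \<noteq> {}" using S(3) by auto
          next
            fix e assume e: "e \<in> edges G - {e0, e1, e2}" "ends G e \<inter> {} = {}"
            show "ends G e \<subseteq> C1 \<or> ends G e \<subseteq> insert c C2"
            proof (cases "c \<in> ends G e")
              case True
              have "ends G e \<noteq> {c, z}"
              proof
                assume "ends G e = {c, z}"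
                then have "ends G e = ends G e0" using e0 by simp
                then show False using L6[OF mg tc cr _ e0(1)] e(1) by blast
              qed
              then obtain y where "y \<in> C2" "ends G e = {c, y}" using atc[of e] e(1) True by blast
              then show ?thesis by blast
            next
              case False
              then have "ends G e \<subseteq> C1 \<or> ends G e \<subseteq> C2" using S(5)[of e] e(1) by blast
              then show ?thesis by blast
            qed
          qed
          then have "\<not> connected (del_edges G {e0, e1, e2})" using conn_iff_edges[OF mg] by blast
          moreover have "c \<in> ends G e0" using e0 by simp
          ultimately show False using nob e0(1) by blast
        next
          case False
          have "sepr G {} {e1, e2} C1 (insert c C2)"
            unfolding sepr_def
          proof (intro conjI ballI impI)
            show "C1 \<inter> insert c C2 = {}" using S(1) cC by blast
            show "C1 \<union> insert c C2 = verts G - {}" using VSX by blast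
            show "C1 \<noteq> {}" "insert c C2 \<noteq> {}" using S(3) by auto
          next
            fix e assume e: "e \<in> edges G - {e1, e2}" "ends G e \<inter> {} = {}"
            show "ends G e \<subseteq> C1 \<or> ends G e \<subseteq> insert c C2"
            proof (cases "c \<in> ends G e")
              case True
              have "\<not> (ends G e = {c, z} \<and> z \<in> C1)" using False e(1) by blast
              then obtain y where "y \<in> C2" "ends G e = {c, y}" using atc[of e] e(1) True by blast
              then show ?thesis by blast
            next
              case nc: False
              then have "ends G e \<subseteq> C1 \<or> ends G e \<subseteq> C2" using S(5)[of e] e(1) by blast
              then show ?thesis by blast
            qed
          qed
          then show False using L5[OF mg tc] by blast
        qed
      qed
      have tc3: "t = u1 \<or> t = u2 \<or> t = c" using t by simp
      then show "\<exists>e\<in>edges G. t \<in> ends G e \<and> ends G e \<subseteq> insert c C1 \<and> z \<notin> ends G e"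
      proof (elim disjE)
        assume "t = u1"
        then show ?thesis using ucase[OF E(1) en(1) u(1) v(1) _ en(2) u12[symmetric] v(2)] zt by blast
      next
        assume "t = u2"
        then show ?thesis using ucase[OF E(2) en(2) u(2) v(2) _ en(1) u12 v(1)] zt by (simp add: insert_commute)
      next
        assume "t = c"
        then show ?thesis using ccase zt by blast
      qed
    qed
  qed
  then interpret P: piece G "insert c C1" C2 "[u1, u2, c]" .
  have "good_piece P.H G" using P.H_good[OF cr] .
  then show ?thesis unfolding P.H_def lst .
qed



lemma comp_conn:
  assumes "connected K" shows "components K = {verts K}"
proof -
  have "comp_of K v = verts K" if "v \<in> verts K" for v
    using assms that unfolding connected_def comp_of_def by auto
  moreover have "verts K \<noteq> {}" using assms unfolding connected_def by simp
  ultimately show ?thesis unfolding components_def by auto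
qed

lemma sep_facts:
  assumes mg: "mgraph G" and tc: "three_connected G" and vs: "v2e_separator G c e1 e2"
  shows "c \<in> verts G" "e1 \<in> edges G" "e2 \<in> edges G" "c \<notin> ends G e1" "c \<notin> ends G e2" "e1 \<noteq> e2"
    "\<exists>A B. sepr G {c} {e1, e2} A B"
proof -
  show cV: "c \<in> verts G" and "e1 \<in> edges G" "e2 \<in> edges G" using vs unfolding v2e_separator_def by auto
  have nc: "\<not> connected (del_vert (del_edges G {e1, e2}) c)" using vs unfolding v2e_separator_def by auto
  have "verts G - {c} \<noteq> {}" using diff_ne[of "{c}" "verts G"] tc unfolding three_connected_def by simp
  then obtain A B where s: "sepr G {c} {e1, e2} A B" using nc conn_iff_vert[OF mg] by blast
  then show "\<exists>A B. sepr G {c} {e1, e2} A B" by blast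
  show "c \<notin> ends G e1" using sepr_insert[of G "{c}" e1 "{e2}" A B] s L4[OF mg tc] by blast
  have s': "sepr G {c} {e2, e1} A B" using s by (simp add: insert_commute)
  show "c \<notin> ends G e2" using sepr_insert[of G "{c}" e2 "{e1}" A B] s' L4[OF mg tc] by blast
  show "e1 \<noteq> e2"
  proof
    assume "e1 = e2"
    then have "sepr G {c} {e2} A B" using s by simp
    then show False using L4[OF mg tc] by blast
  qed
qed

lemma two_comps:
  assumes "{C1, C2} = {A, B}" "C1 \<noteq> C2" "sepr G W F A B"
  shows "sepr G W F C1 C2"
  using assms sepr_sym by (metis doubleton_eq_iff)

theorem theorem7:
  fixes G :: "('v, 'e) mgraph" and c :: 'v and e1 e2 :: 'e
  assumes "mgraph G"
    and "three_connected G"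
    and "v2e_separator G c e1 e2"
    and "\<not> degenerate G c e1 e2"
  shows "(\<forall>e0 C1 C2. e0 \<in> edges G \<and> c \<in> ends G e0 \<and>
            components (del_edges G {e0, e1, e2}) = {C1, C2} \<and> C1 \<noteq> C2 \<and>
            critical_two_half_connected G \<longrightarrow>
              good_piece (glue G C1 [ends G e0 \<inter> C1, ends G e1 \<inter> C1, ends G e2 \<inter> C1]) G \<and>
              good_piece (glue G C2 [ends G e0 \<inter> C2, ends G e1 \<inter> C2, ends G e2 \<inter> C2]) G)
       \<and> (\<not> (\<exists>e0 \<in> edges G. c \<in> ends G e0 \<and> \<not> connected (del_edges G {e0, e1, e2})) \<longrightarrow>
            card (components (del_vert (del_edges G {e1, e2}) c)) = 2 \<and>
            (critical_two_half_connected G \<longrightarrow>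
              (\<forall>C1 C2. components (del_vert (del_edges G {e1, e2}) c) = {C1, C2} \<and> C1 \<noteq> C2 \<longrightarrow>
                good_piece (glue G (insert c C1) [ends G e1 \<inter> C1, ends G e2 \<inter> C1, {c}]) G \<and>
                good_piece (glue G (insert c C2) [ends G e1 \<inter> C2, ends G e2 \<inter> C2, {c}]) G)))"
proof -
  note mg = assms(1) and tc = assms(2) and nd = assms(4)
  note sf = sep_facts[OF mg tc assms(3)]
  have crit: "\<forall>f\<in>edges G. \<not> two_half_connected (del_edges G {f})" if "critical_two_half_connected G"
    using that unfolding critical_two_half_connected_def by blast
  have c3: "card (verts G) > 3" using tc unfolding three_connected_def by blast
  have partA: "good_piece (glue G C1 [ends G e0 \<inter> C1, ends G e1 \<inter> C1, ends G e2 \<inter> C1]) G \<and>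
              good_piece (glue G C2 [ends G e0 \<inter> C2, ends G e1 \<inter> C2, ends G e2 \<inter> C2]) G"
    if h: "e0 \<in> edges G" "c \<in> ends G e0" "components (del_edges G {e0, e1, e2}) = {C1, C2}" "C1 \<noteq> C2"
      "critical_two_half_connected G" for e0 C1 C2
  proof -
    have cr: "\<forall>f\<in>edges G. \<not> two_half_connected (del_edges G {f})" using crit h(5) .
    let ?F = "{e0, e1, e2}"
    have ncon: "\<not> connected (del_edges G ?F)"
    proof
      assume "connected (del_edges G ?F)"
      then have eq: "{C1, C2} = {verts (del_edges G ?F)}" using comp_conn h(3) by metis
      have "C1 \<in> {C1, C2}" "C2 \<in> {C1, C2}" by simp_all
      then have "C1 = verts (del_edges G ?F)" "C2 = verts (del_edges G ?F)" unfolding eq by simp_all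
      then show False using h(4) by simp
    qed
    have "verts G \<noteq> {}" using c3 by auto
    then obtain A B where sAB: "sepr G {} ?F A B" using ncon conn_iff_edges[OF mg] by blast
    have small: "\<forall>X Y. \<not> sepr G {} (?F - {f}) X Y" if "f \<in> ?F" for f
    proof (intro allI notI)
      fix X Y assume sx: "sepr G {} (?F - {f}) X Y"
      from that consider "f = e0" | "f = e1" | "f = e2" by blast
      then show False
      proof cases
        case 1 then have "?F - {f} \<subseteq> {e1, e2}" by blast
        then have "sepr G {} {e1, e2} X Y" by (rule sepr_mono[OF sx])
        then show False by (rule L5[OF mg tc])
      next
        case 2 then have "?F - {f} \<subseteq> {e0, e2}" by blast
        then have "sepr G {} {e0, e2} X Y" by (rule sepr_mono[OF sx])
        then show False by (rule L5[OF mg tc])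
      next
        case 3 then have "?F - {f} \<subseteq> {e0, e1}" by blast
        then have "sepr G {} {e0, e1} X Y" by (rule sepr_mono[OF sx])
        then show False by (rule L5[OF mg tc])
      qed
    qed
    have small': "\<forall>f\<in>?F. \<forall>X Y. \<not> sepr G {} (?F - {f}) X Y" using small by blast
    have Fne: "?F \<noteq> {}" by simp
    have "components (del_verts (del_edges G ?F) {}) = {A, B}" using L10[OF mg Fne small' sAB] .
    then have "components (del_edges G ?F) = {A, B}" by (simp only: del_edges_eq[symmetric])
    then have "{C1, C2} = {A, B}" using h(3) by simp
    then have s: "sepr G {} ?F C1 C2" using two_comps[OF _ h(4) sAB] by simp
    have s': "sepr G {} ?F C2 C1" using sepr_sym[OF s] .
    have cs1: "conn_set G C1" using L10_conn[OF mg Fne small' s] .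
    have cs2: "conn_set G C2" using L10_conn[OF mg Fne small' s'] .
    note S = sepr_E[OF s]
    have d01: "e0 \<noteq> e1"
    proof
      assume "e0 = e1" then have "sepr G {} {e1, e2} C1 C2" using s by simp
      then show False using L5[OF mg tc] by blast
    qed
    have d02: "e0 \<noteq> e2"
    proof
      assume "e0 = e2" then have "sepr G {} {e1, e2} C1 C2" using s by (simp add: insert_commute)
      then show False using L5[OF mg tc] by blast
    qed
    have crossE: "\<exists>a b. a \<in> C1 \<and> b \<in> C2 \<and> ends G e = {a, b}" if e: "e \<in> ?F" for e
    proof -
      obtain g k where Fe: "?F = insert e {g, k}" using e by blast
      have "sepr G {} (insert e {g, k}) C1 C2" using s Fe by simp
      from sepr_insert[OF this] L5[OF mg tc]
      have cr1: "e \<in> edges G \<and> \<not> ends G e \<subseteq> C1 \<and> \<not> ends G e \<subseteq> C2" by blast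
      have "ends G e \<subseteq> C1 \<union> C2" using mgraph_ends[OF mg] cr1 S(2) by simp
      then show ?thesis using cross_ab[OF mg _ _ S(1)] cr1 by blast
    qed
    obtain u0 v0 where e0e: "u0 \<in> C1" "v0 \<in> C2" "ends G e0 = {u0, v0}" using crossE by blast
    obtain u1 v1 where e1e: "u1 \<in> C1" "v1 \<in> C2" "ends G e1 = {u1, v1}" using crossE by blast
    obtain u2 v2 where e2e: "u2 \<in> C1" "v2 \<in> C2" "ends G e2 = {u2, v2}" using crossE by blast
    have E: "e0 \<in> edges G" "e1 \<in> edges G" "e2 \<in> edges G" using h(1) sf(2,3) by auto
    have d: "e0 \<noteq> e1" "e0 \<noteq> e2" "e1 \<noteq> e2" using d01 d02 sf(6) by auto
    have cc: "c \<in> ends G e0" "c \<notin> ends G e1" "c \<notin> ends G e2" using h(2) sf(4,5) by auto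
    have en': "ends G e0 = {v0, u0}" "ends G e1 = {v1, u1}" "ends G e2 = {v2, u2}"
      using e0e e1e e2e by (auto simp: insert_commute)
    have c2: "card C2 \<ge> 3"
      using A_dist(2)[OF mg tc s' d E en' e0e(2) e1e(2) e2e(2) e0e(1) e1e(1) e2e(1) cc nd] .
    have c1: "card C1 \<ge> 3"
      using A_dist(2)[OF mg tc s d E e0e(3) e1e(3) e2e(3) e0e(1) e1e(1) e2e(1) e0e(2) e1e(2) e2e(2) cc nd] .
    show ?thesis
    proof
      show "good_piece (glue G C1 [ends G e0 \<inter> C1, ends G e1 \<inter> C1, ends G e2 \<inter> C1]) G"
        using A_piece[OF mg tc cr s d E e0e(3) e1e(3) e2e(3) e0e(1) e1e(1) e2e(1) e0e(2) e1e(2) e2e(2) cc nd cs2 c2] .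
      show "good_piece (glue G C2 [ends G e0 \<inter> C2, ends G e1 \<inter> C2, ends G e2 \<inter> C2]) G"
        using A_piece[OF mg tc cr s' d E en' e0e(2) e1e(2) e2e(2) e0e(1) e1e(1) e2e(1) cc nd cs1 c1] .
    qed
  qed
  have partB: "card (components (del_vert (del_edges G {e1, e2}) c)) = 2 \<and>
            (critical_two_half_connected G \<longrightarrow>
              (\<forall>C1 C2. components (del_vert (del_edges G {e1, e2}) c) = {C1, C2} \<and> C1 \<noteq> C2 \<longrightarrow>
                good_piece (glue G (insert c C1) [ends G e1 \<inter> C1, ends G e2 \<inter> C1, {c}]) G \<and>
                good_piece (glue G (insert c C2) [ends G e1 \<inter> C2, ends G e2 \<inter> C2, {c}]) G))"
    if nob: "\<not> (\<exists>e0 \<in> edges G. c \<in> ends G e0 \<and> \<not> connected (del_edges G {e0, e1, e2}))"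
  proof -
    obtain A B where sAB: "sepr G {c} {e1, e2} A B" using sf(7) by blast
    have small: "\<forall>X Y. \<not> sepr G {c} ({e1, e2} - {f}) X Y" if "f \<in> {e1, e2}" for f
    proof (intro allI notI)
      fix X Y assume sx: "sepr G {c} ({e1, e2} - {f}) X Y"
      from that consider "f = e1" | "f = e2" by blast
      then show False
      proof cases
        case 1 then have "{e1, e2} - {f} \<subseteq> {e2}" by blast
        then have "sepr G {c} {e2} X Y" by (rule sepr_mono[OF sx])
        then show False by (rule L4[OF mg tc])
      next
        case 2 then have "{e1, e2} - {f} \<subseteq> {e1}" by blast
        then have "sepr G {c} {e1} X Y" by (rule sepr_mono[OF sx])
        then show False by (rule L4[OF mg tc])
      qed
    qed
    have small': "\<forall>f\<in>{e1, e2}. \<forall>X Y. \<not> sepr G {c} ({e1, e2} - {f}) X Y" using small by blast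
    have Fne: "{e1, e2} \<noteq> {}" by simp
    have "components (del_verts (del_edges G {e1, e2}) {c}) = {A, B}" using L10[OF mg Fne small' sAB] .
    then have compeq: "components (del_vert (del_edges G {e1, e2}) c) = {A, B}" by (simp only: del_vert_eq)
    have "A \<noteq> B" using sepr_E[OF sAB] by blast
    then have card2: "card (components (del_vert (del_edges G {e1, e2}) c)) = 2" using compeq by simp
    have rest: "good_piece (glue G (insert c C1) [ends G e1 \<inter> C1, ends G e2 \<inter> C1, {c}]) G \<and>
                good_piece (glue G (insert c C2) [ends G e1 \<inter> C2, ends G e2 \<inter> C2, {c}]) G"
      if ct: "critical_two_half_connected G" and cc: "components (del_vert (del_edges G {e1, e2}) c) = {C1, C2}"
        and ne: "C1 \<noteq> C2" for C1 C2
    proof -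
      have cr: "\<forall>f\<in>edges G. \<not> two_half_connected (del_edges G {f})" using crit ct .
      have s: "sepr G {c} {e1, e2} C1 C2" using two_comps[OF _ ne sAB] cc compeq by simp
      have s': "sepr G {c} {e1, e2} C2 C1" using sepr_sym[OF s] .
      have cs1: "conn_set G C1" using L10_conn[OF mg Fne small' s] .
      have cs2: "conn_set G C2" using L10_conn[OF mg Fne small' s'] .
      note S = sepr_E[OF s]
      have crossE: "\<exists>a b. a \<in> C1 \<and> b \<in> C2 \<and> ends G e = {a, b}" if e: "e \<in> {e1, e2}" and cn: "c \<notin> ends G e" for e
      proof -
        obtain g where Fe: "{e1, e2} = insert e {g}" using e by blast
        have "sepr G {c} (insert e {g}) C1 C2" using s Fe by simp
        from sepr_insert[OF this] L4[OF mg tc]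
        have cr1: "e \<in> edges G \<and> \<not> ends G e \<subseteq> C1 \<and> \<not> ends G e \<subseteq> C2" by blast
        have "ends G e \<subseteq> C1 \<union> C2" using mgraph_ends[OF mg] cr1 S(2) cn by blast
        then show ?thesis using cross_ab[OF mg _ _ S(1)] cr1 by blast
      qed
      obtain u1 v1 where e1e: "u1 \<in> C1" "v1 \<in> C2" "ends G e1 = {u1, v1}" using crossE sf(4) by blast
      obtain u2 v2 where e2e: "u2 \<in> C1" "v2 \<in> C2" "ends G e2 = {u2, v2}" using crossE sf(5) by blast
      have en': "ends G e1 = {v1, u1}" "ends G e2 = {v2, u2}" using e1e e2e by (auto simp: insert_commute)
      have finV: "finite (verts G)" using mg unfolding mgraph_def by blast
      have v12: "v1 \<noteq> v2"
        using B_dist[OF mg tc cr s' sf(1) sf(6) sf(2,3) en' e1e(2) e2e(2) e1e(1) e2e(1) sf(4,5) nd] .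
      have u12: "u1 \<noteq> u2"
        using B_dist[OF mg tc cr s sf(1) sf(6) sf(2,3) e1e(3) e2e(3) e1e(1) e2e(1) e1e(2) e2e(2) sf(4,5) nd] .
      have "C2 \<subseteq> verts G" "C1 \<subseteq> verts G" using S(2) by blast+
      then have fin: "finite C1" "finite C2" using finV by (auto intro: finite_subset)
      have "card {v1, v2} \<le> card C2" using fin e1e e2e by (intro card_mono) auto
      then have c2: "card C2 \<ge> 2" using v12 by simp
      have "card {u1, u2} \<le> card C1" using fin e1e e2e by (intro card_mono) auto
      then have c1: "card C1 \<ge> 2" using u12 by simp
      show ?thesis
      proof
        show "good_piece (glue G (insert c C1) [ends G e1 \<inter> C1, ends G e2 \<inter> C1, {c}]) G"
          using B_piece[OF mg tc cr s sf(1) sf(6) sf(2,3) e1e(3) e2e(3) e1e(1) e2e(1) e1e(2) e2e(2) sf(4,5) nd nob cs2 c2] .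
        show "good_piece (glue G (insert c C2) [ends G e1 \<inter> C2, ends G e2 \<inter> C2, {c}]) G"
          using B_piece[OF mg tc cr s' sf(1) sf(6) sf(2,3) en' e1e(2) e2e(2) e1e(1) e2e(1) sf(4,5) nd nob cs1 c1] .
      qed
    qed
    show ?thesis using card2 rest by blast
  qed
  show ?thesis
    apply (rule conjI)
     apply (intro allI impI)
     apply (elim conjE)
     apply (rule partA; assumption)
    apply (rule impI)
    apply (rule partB)
    apply assumption
    done
qed

end
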